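(* Let $p\in[1,\infty]$, $\alpha\in[0,1]$ irrational, $\theta\in[0,1)$ and $\lambda\in\mathbb{R}$. Then $\sigma(H_{\lambda,\alpha,\theta})\subset\sigma((H_{\lambda,\alpha,\theta})_+)$.
   Context: $(H_{\lambda,\alpha,\theta}x)_n=x_{n+1}+x_{n-1}+\lambda v_{\alpha,\theta}(n)x_n$ on $\ell^p(\mathbb{Z})$ with $v_{\alpha,\theta}(n)=\chi_{[1-\alpha,1)}(n\alpha+\theta\bmod 1)$. For an operator $A=(a_{ij})_{i,j\in\mathbb{Z}}$, $A_+:=(a_{ij})_{i,j=0}^\infty$ acting on $\ell^p(\mathbb{Z}_+)$, $\mathbb{Z}_+=\{0,1,2,\dots\}$. *)

theory Defs
  imports "HOL-Analysis.Analysis"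
begin

definition lp_space :: "ereal \<Rightarrow> ('i \<Rightarrow> complex) set" where
  "lp_space p = {x. if p = \<infinity> then bounded (range x)
                    else (\<lambda>n. norm (x n) powr real_of_ereal p) summable_on UNIV}"

text \<open>By the open mapping theorem,
  invertibility in B(X) is equivalent to bijectivity of A - z I on X.\<close>
definition op_spectrum :: "('i \<Rightarrow> complex) set \<Rightarrow> (('i \<Rightarrow> complex) \<Rightarrow> ('i \<Rightarrow> complex)) \<Rightarrow> complex set" where
  "op_spectrum X A = {z. \<not> bij_betw (\<lambda>x n. A x n - z * x n) X X}"

definition sturm_pot :: "real \<Rightarrow> real \<Rightarrow> int \<Rightarrow> real" where
  "sturm_pot \<alpha> \<theta> n = (if frac (of_int n * \<alpha> + \<theta>) \<in> {1 - \<alpha> ..< 1} then 1 else 0)"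

definition H_op :: "real \<Rightarrow> real \<Rightarrow> real \<Rightarrow> (int \<Rightarrow> complex) \<Rightarrow> (int \<Rightarrow> complex)" where
  "H_op lam \<alpha> \<theta> x n = x (n + 1) + x (n - 1) + of_real (lam * sturm_pot \<alpha> \<theta> n) * x n"

definition H_plus :: "real \<Rightarrow> real \<Rightarrow> real \<Rightarrow> (nat \<Rightarrow> complex) \<Rightarrow> (nat \<Rightarrow> complex)" where
  "H_plus lam \<alpha> \<theta> x n = x (n + 1) + (if n = 0 then 0 else x (n - 1))
      + of_real (lam * sturm_pot \<alpha> \<theta> (int n)) * x n"

end

theory Submission
  imports Defs
begin

definition dg :: "ereal \<Rightarrow> real" where
  "dg p = (if p = \<infinity> then 1 else real_of_ereal p)"

definition szp :: "ereal \<Rightarrow> ('i \<Rightarrow> complex) \<Rightarrow> 'i set \<Rightarrow> real" where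
  "szp p x S = (if p = \<infinity> then Max (insert 0 ((\<lambda>n. norm (x n)) ` S))
               else (\<Sum>n\<in>S. norm (x n) powr real_of_ereal p))"

definition comb :: "ereal \<Rightarrow> real \<Rightarrow> real \<Rightarrow> real" where
  "comb p a b = (if p = \<infinity> then max a b else a powr dg p + b)"

lemma dg_ge1: "1 \<le> p \<Longrightarrow> 1 \<le> dg p"
  unfolding dg_def by (cases p) auto

lemma dg_pos: "1 \<le> p \<Longrightarrow> 0 < dg p"
  using dg_ge1[of p] by linarith

lemma szp_empty[simp]: "szp p x {} = 0"
  unfolding szp_def by simp

lemma szp_insert:
  assumes "finite S" "n \<notin> S"
  shows "szp p x (insert n S) = comb p (norm (x n)) (szp p x S)"
proof (cases "p = \<infinity>")
  case True
  have e: "insert 0 (insert (norm (x n)) ((\<lambda>n. norm (x n)) ` S))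
      = insert (norm (x n)) (insert 0 ((\<lambda>n. norm (x n)) ` S))" by auto
  have "Max (insert 0 (insert (norm (x n)) ((\<lambda>n. norm (x n)) ` S)))
      = max (norm (x n)) (Max (insert 0 ((\<lambda>n. norm (x n)) ` S)))"
    unfolding e using assms by (subst Max_insert) auto
  then show ?thesis using True unfolding szp_def comb_def by simp
next
  case False
  then show ?thesis using assms unfolding szp_def comb_def dg_def by simp
qed

lemma szp_nonneg: "finite S \<Longrightarrow> 0 \<le> szp p x S"
  unfolding szp_def by (auto intro: sum_nonneg)

lemma comb_mono: "1 \<le> p \<Longrightarrow> 0 \<le> a \<Longrightarrow> a \<le> a' \<Longrightarrow> b \<le> b' \<Longrightarrow> comb p a b \<le> comb p a' b'"
  unfolding comb_def using dg_pos[of p] by (auto intro!: add_mono powr_mono2)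

lemma szp_induct_le:
  assumes "finite S" "1 \<le> p"
    and "\<And>n. n \<in> S \<Longrightarrow> norm (x n) \<le> norm (y n)"
  shows "szp p x S \<le> szp p y S"
  using assms
proof (induction S rule: finite_induct)
  case (insert n S)
  then have "szp p x S \<le> szp p y S" by auto
  moreover have "norm (x n) \<le> norm (y n)" using insert by auto
  ultimately show ?case using insert
    by (simp add: szp_insert comb_mono)
qed simp

lemma szp_mono_fun:
  "finite S \<Longrightarrow> 1 \<le> p \<Longrightarrow> (\<And>n. n \<in> S \<Longrightarrow> norm (x n) \<le> norm (y n)) \<Longrightarrow> szp p x S \<le> szp p y S"
  using szp_induct_le by blast

lemma szp_cong:
  assumes H: "\<And>n. n \<in> S \<Longrightarrow> x n = y n"
  shows "szp p x S = szp p y S"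
proof -
  have "(\<lambda>n. norm (x n)) ` S = (\<lambda>n. norm (y n)) ` S" by (rule image_cong) (auto simp: H)
  moreover have "(\<Sum>n\<in>S. norm (x n) powr real_of_ereal p) = (\<Sum>n\<in>S. norm (y n) powr real_of_ereal p)"
    by (rule sum.cong) (auto simp: H)
  ultimately show ?thesis unfolding szp_def by simp
qed

lemma szp_zero: "(\<And>n. n \<in> S \<Longrightarrow> x n = 0) \<Longrightarrow> szp p x S = 0"
proof -
  assume "\<And>n. n \<in> S \<Longrightarrow> x n = 0"
  then have "szp p x S = szp p (\<lambda>_. 0) S" by (rule szp_cong)
  also have "\<dots> = 0"
  proof (cases "p = \<infinity>")
    case True
    show ?thesis using True unfolding szp_def by (simp add: image_constant_conv)
  qed (simp add: szp_def)
  finally show ?thesis .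
qed

lemma szp_mono_set:
  assumes "finite T" "S \<subseteq> T"
  shows "szp p x S \<le> szp p x T"
proof (cases "p = \<infinity>")
  case True
  have "Max (insert 0 ((\<lambda>n. norm (x n)) ` S)) \<le> Max (insert 0 ((\<lambda>n. norm (x n)) ` T))"
    by (rule Max_mono) (use assms in auto)
  then show ?thesis using True unfolding szp_def by simp
next
  case False
  then show ?thesis using assms unfolding szp_def by (auto intro!: sum_mono2)
qed

lemma szp_union:
  assumes "finite S" "finite T"
  shows "szp p x (S \<union> T) \<le> szp p x S + szp p x T"
proof (cases "p = \<infinity>")
  case True
  let ?f = "\<lambda>n. norm (x n)"
  have "Max (insert 0 (?f ` (S \<union> T))) = max (Max (insert 0 (?f ` S))) (Max (insert 0 (?f ` T)))"
  proof -
    have "insert 0 (?f ` (S \<union> T)) = insert 0 (?f ` S) \<union> insert 0 (?f ` T)" by auto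
    moreover have "Max (insert 0 (?f ` S) \<union> insert 0 (?f ` T)) = max (Max (insert 0 (?f ` S))) (Max (insert 0 (?f ` T)))"
      by (rule Max_Un) (use assms in auto)
    ultimately show ?thesis by simp
  qed
  moreover have "0 \<le> Max (insert 0 (?f ` S))" "0 \<le> Max (insert 0 (?f ` T))"
    using assms by auto
  ultimately show ?thesis using True unfolding szp_def by simp
next
  case False
  have "(\<Sum>n\<in>S \<union> T. norm (x n) powr real_of_ereal p)
     \<le> (\<Sum>n\<in>S. norm (x n) powr real_of_ereal p) + (\<Sum>n\<in>T. norm (x n) powr real_of_ereal p)"
  proof -
    have "0 \<le> (\<Sum>n\<in>S \<inter> T. norm (x n) powr real_of_ereal p)" by (rule sum_nonneg) simp
    then show ?thesis using sum_Un[OF assms, of "\<lambda>n. norm (x n) powr real_of_ereal p"] by linarith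
  qed
  then show ?thesis using False unfolding szp_def by simp
qed

lemma szp_point:
  assumes "finite S" "n \<in> S" "1 \<le> p"
  shows "norm (x n) powr dg p \<le> szp p x S"
proof -
  have "szp p x {n} \<le> szp p x S" using assms by (intro szp_mono_set) auto
  moreover have "szp p x {n} = norm (x n) powr dg p"
    using szp_insert[of "{}" n p x] by (cases "p = \<infinity>") (simp_all add: comb_def dg_def)
  ultimately show ?thesis by simp
qed

lemma szp_point':
  assumes "finite S" "n \<in> S" "1 \<le> p"
  shows "norm (x n) \<le> szp p x S powr (1 / dg p)"
proof -
  have "(norm (x n) powr dg p) powr (1 / dg p) = norm (x n) powr (dg p * (1 / dg p))"
    by (rule powr_powr)
  also have "dg p * (1 / dg p) = 1" using dg_pos[OF assms(3)] by simp
  finally have "norm (x n) = (norm (x n) powr dg p) powr (1 / dg p)" by simp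
  also have "\<dots> \<le> szp p x S powr (1 / dg p)"
    by (rule powr_mono2) (use szp_point[OF assms] dg_pos[OF assms(3)] in auto)
  finally show ?thesis .
qed

lemma szp_scale:
  assumes "finite S" "1 \<le> p"
  shows "szp p (\<lambda>n. t * x n) S = norm t powr dg p * szp p x S"
  using assms(1)
proof (induction S rule: finite_induct)
  case empty then show ?case by simp
next
  case (insert n S)
  have "comb p (norm (t * x n)) (norm t powr dg p * szp p x S)
       = norm t powr dg p * comb p (norm (x n)) (szp p x S)"
  proof (cases "p = \<infinity>")
    case True
    then have "dg p = 1" by (simp add: dg_def)
    then show ?thesis using True unfolding comb_def
      by (cases "t = 0") (auto simp: norm_mult max_mult_distrib_left)
  next
    case False
    then show ?thesis unfolding comb_def
      by (simp add: norm_mult powr_mult distrib_left)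
  qed
  then show ?case using insert by (simp add: szp_insert)
qed

lemma aux2: "(a::real) \<le> b + c \<Longrightarrow> 0 \<le> b \<Longrightarrow> 0 \<le> c \<Longrightarrow> a \<le> 2 * (b + c)"
  unfolding distrib_left by linarith

lemma szp_add:
  assumes "finite S" "1 \<le> p"
  shows "szp p (\<lambda>n. x n + y n) S \<le> 2 powr dg p * (szp p x S + szp p y S)"
  using assms(1)
proof (induction S rule: finite_induct)
  case empty then show ?case by simp
next
  case (insert n S)
  have d: "1 \<le> dg p" using dg_ge1[OF assms(2)] .
  have nn: "0 \<le> szp p x S" "0 \<le> szp p y S" using insert by (auto intro: szp_nonneg)
  show ?case
  proof (cases "p = \<infinity>")
    case True
    then have "dg p = 1" by (simp add: dg_def)
    have IH: "szp p (\<lambda>n. x n + y n) S \<le> 2 * (szp p x S + szp p y S)"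
      using insert.IH \<open>dg p = 1\<close> by simp
    have h1: "norm (x n + y n) \<le> norm (x n) + norm (y n)" by (rule norm_triangle_ineq)
    have m: "norm (x n) \<le> max (norm (x n)) (szp p x S)" "szp p x S \<le> max (norm (x n)) (szp p x S)"
      "norm (y n) \<le> max (norm (y n)) (szp p y S)" "szp p y S \<le> max (norm (y n)) (szp p y S)" by auto
    let ?R = "2 * (max (norm (x n)) (szp p x S) + max (norm (y n)) (szp p y S))"
    have "norm (x n + y n) \<le> max (norm (x n)) (szp p x S) + max (norm (y n)) (szp p y S)"
      by (rule order_trans[OF h1 add_mono[OF m(1) m(3)]])
    moreover have "0 \<le> max (norm (x n)) (szp p x S)" "0 \<le> max (norm (y n)) (szp p y S)" using nn by auto
    ultimately have "norm (x n + y n) \<le> ?R" by (rule aux2)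
    moreover have "szp p (\<lambda>n. x n + y n) S \<le> ?R"
      using IH h1 m nn norm_ge_zero[of "x n"] norm_ge_zero[of "y n"] unfolding distrib_left by linarith
    ultimately have "max (norm (x n + y n)) (szp p (\<lambda>n. x n + y n) S) \<le> ?R" by simp
    then show ?thesis using True insert \<open>dg p = 1\<close> by (simp add: szp_insert comb_def)
  next
    case False
    let ?a = "norm (x n)" and ?b = "norm (y n)"
    have "norm (x n + y n) powr dg p \<le> (2 * max ?a ?b) powr dg p"
    proof -
      have "?a \<le> max ?a ?b" "?b \<le> max ?a ?b" by auto
      then have "norm (x n + y n) \<le> 2 * max ?a ?b" using norm_triangle_ineq[of "x n" "y n"] by linarith
      then show ?thesis using d by (intro powr_mono2) auto
    qed
    also have "\<dots> = 2 powr dg p * (max ?a ?b) powr dg p"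
      by (simp add: powr_mult)
    also have "\<dots> \<le> 2 powr dg p * (?a powr dg p + ?b powr dg p)"
      by (intro mult_left_mono) (auto simp: max_def)
    finally have "norm (x n + y n) powr dg p \<le> 2 powr dg p * (?a powr dg p + ?b powr dg p)" .
    then show ?thesis using False insert
      by (simp add: szp_insert comb_def distrib_left)
  qed
qed

lemma szp_le_card:
  assumes "finite S" "1 \<le> p" "0 \<le> K" "\<And>n. n \<in> S \<Longrightarrow> norm (x n) \<le> K"
  shows "szp p x S \<le> real (card S) * K powr dg p"
  using assms(1,4)
proof (induction S rule: finite_induct)
  case empty then show ?case by simp
next
  case (insert n S)
  have "szp p x S \<le> real (card S) * K powr dg p" using insert by auto
  moreover have "norm (x n) \<le> K" using insert by auto
  moreover have "norm (x n) powr dg p \<le> K powr dg p"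
    using \<open>norm (x n) \<le> K\<close> dg_pos[OF assms(2)] by (intro powr_mono2) auto
  moreover have "0 \<le> real (card S) * K powr dg p" by auto
  moreover have "0 \<le> real (card S) * K" using assms(3) by simp
  ultimately show ?case
  proof (cases "p = \<infinity>")
    case True
    have "szp p x (insert n S) = max (norm (x n)) (szp p x S)" using insert True by (simp add: szp_insert comb_def)
    moreover have "real (card (insert n S)) * K powr dg p = K + real (card S) * K" using insert True assms(3) by (simp add: dg_def algebra_simps)
    moreover have "0 \<le> real (card S) * K" using assms(3) by simp
    moreover have "szp p x S \<le> real (card S) * K" using \<open>szp p x S \<le> real (card S) * K powr dg p\<close> True assms(3) by (simp add: dg_def)
    ultimately show ?thesis using  \<open>norm (x n) \<le> K\<close> True assms(3)
      by (simp add: add_increasing2 add_increasing)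
  next
    case False
    then show ?thesis using insert \<open>szp p x S \<le> real (card S) * K powr dg p\<close> \<open>norm (x n) powr dg p \<le> K powr dg p\<close>
      by (simp add: szp_insert comb_def algebra_simps dg_def)
  qed
qed

lemma szp_reindex:
  assumes "inj_on f S"
  shows "szp p (\<lambda>n. x (f n)) S = szp p x (f ` S)"
  using assms unfolding szp_def by (simp add: sum.reindex image_image)

lemma szp_tendsto:
  assumes "finite S" "1 \<le> p" "\<And>n. n \<in> S \<Longrightarrow> ((\<lambda>t. f t n) \<longlongrightarrow> g n) F"
  shows "((\<lambda>t. szp p (f t) S) \<longlongrightarrow> szp p g S) F"
  using assms(1,3)
proof (induction S rule: finite_induct)
  case empty then show ?case by simp
next
  case (insert n S)
  have t1: "((\<lambda>t. norm (f t n)) \<longlongrightarrow> norm (g n)) F" by (rule tendsto_norm) (rule insert.prems, simp)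
  have t2: "((\<lambda>t. szp p (f t) S) \<longlongrightarrow> szp p g S) F" by (rule insert.IH) (rule insert.prems, simp)
  have "((\<lambda>t. comb p (norm (f t n)) (szp p (f t) S)) \<longlongrightarrow> comb p (norm (g n)) (szp p g S)) F"
  proof (cases "p = \<infinity>")
    case True then show ?thesis unfolding comb_def using tendsto_max[OF t1 t2] by simp
  next
    case False
    have "((\<lambda>t. norm (f t n) powr dg p) \<longlongrightarrow> norm (g n) powr dg p) F"
      by (rule tendsto_powr'[OF t1 tendsto_const]) (use dg_pos[OF assms(2)] in auto)
    then show ?thesis unfolding comb_def using False tendsto_add[OF _ t2] by simp
  qed
  then show ?case using insert by (simp add: szp_insert)
qed

lemma lp_iff:
  assumes "1 \<le> p"
  shows "x \<in> lp_space p \<longleftrightarrow> (\<exists>K. \<forall>S. finite S \<longrightarrow> szp p x S \<le> K)"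
proof (cases "p = \<infinity>")
  case True
  show ?thesis
  proof
    assume "x \<in> lp_space p"
    then have "bounded (range x)" using True by (simp add: lp_space_def)
    then obtain K where K: "\<And>n. norm (x n) \<le> K" by (auto simp: bounded_iff)
    have "0 \<le> K" using K[of undefined] norm_ge_zero[of "x undefined"] by linarith
    have "szp p x S \<le> max K 0" if "finite S" for S
      using True that K \<open>0 \<le> K\<close> by (simp add: szp_def Max_le_iff le_max_iff_disj)
    then show "\<exists>K. \<forall>S. finite S \<longrightarrow> szp p x S \<le> K" by blast
  next
    assume "\<exists>K. \<forall>S. finite S \<longrightarrow> szp p x S \<le> K"
    then obtain K where K: "\<And>S. finite S \<Longrightarrow> szp p x S \<le> K" by blast
    have "norm (x n) \<le> K" for n
      using szp_point[of "{n}" n p x] K[of "{n}"] True assms by (simp add: dg_def)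
    then have "bounded (range x)" by (auto simp: bounded_iff)
    then show "x \<in> lp_space p" using True by (simp add: lp_space_def)
  qed
next
  case False
  let ?f = "\<lambda>n. norm (x n) powr real_of_ereal p"
  show ?thesis
  proof
    assume "x \<in> lp_space p"
    then have s: "?f summable_on UNIV" using False by (simp add: lp_space_def)
    have "szp p x S \<le> infsum ?f UNIV" if "finite S" for S
      using False finite_sum_le_infsum[OF s that] unfolding szp_def by auto
    then show "\<exists>K. \<forall>S. finite S \<longrightarrow> szp p x S \<le> K" by blast
  next
    assume "\<exists>K. \<forall>S. finite S \<longrightarrow> szp p x S \<le> K"
    then obtain K where K: "\<And>S. finite S \<Longrightarrow> szp p x S \<le> K" by blast
    have "?f summable_on UNIV"
      by (rule nonneg_bdd_above_summable_on)
        (use K False in \<open>auto simp: szp_def bdd_above_def\<close>)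
    then show "x \<in> lp_space p" using False by (simp add: lp_space_def)
  qed
qed

definition Bop :: "(int \<Rightarrow> complex) \<Rightarrow> (int \<Rightarrow> complex) \<Rightarrow> int \<Rightarrow> complex" where
  "Bop c x n = x (n + 1) + x (n - 1) + c n * x n"

definition LB :: "ereal \<Rightarrow> (int \<Rightarrow> complex) \<Rightarrow> real \<Rightarrow> bool" where
  "LB p c C \<longleftrightarrow> (\<forall>x a b. (\<forall>n. n < a \<or> b < n \<longrightarrow> x n = 0) \<longrightarrow>
       szp p x {a..b} \<le> C * szp p (Bop c x) {a - 1..b + 1})"

definition blk :: "int \<Rightarrow> int \<Rightarrow> int set" where
  "blk L j = {j * L ..< (j + 1) * L}"

definition tentT :: "int \<Rightarrow> int \<Rightarrow> int \<Rightarrow> int" where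
  "tentT a L n = (if n < a then 0 else if n < a + L then n - a else if n < a + 2 * L then L
                  else if n < a + 3 * L then a + 3 * L - 1 - n else 0)"

lemma szp_norm_eq:
  assumes "\<And>n. n \<in> S \<Longrightarrow> norm (x n) = norm (y n)"
  shows "szp p x S = szp p y S"
proof -
  have "(\<lambda>n. norm (x n)) ` S = (\<lambda>n. norm (y n)) ` S" by (rule image_cong) (auto simp: assms)
  moreover have "(\<Sum>n\<in>S. norm (x n) powr real_of_ereal p) = (\<Sum>n\<in>S. norm (y n) powr real_of_ereal p)"
    by (rule sum.cong) (auto simp: assms)
  ultimately show ?thesis unfolding szp_def by simp
qed

lemma powr_le_self: "0 \<le> (x::real) \<Longrightarrow> x \<le> 1 \<Longrightarrow> 1 \<le> d \<Longrightarrow> x powr d \<le> x"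
  using powr_mono'[of 1 d x] by simp

lemma tentT_diff: "L \<ge> 1 \<Longrightarrow> \<bar>tentT a L (n + 1) - tentT a L n\<bar> \<le> 1"
  unfolding tentT_def by auto

lemma tentT_diff': "L \<ge> 1 \<Longrightarrow> \<bar>tentT a L (n - 1) - tentT a L n\<bar> \<le> 1"
  unfolding tentT_def by auto

lemma tentT_zero: "L \<ge> 1 \<Longrightarrow> n \<le> a \<or> a + 3 * L - 1 \<le> n \<Longrightarrow> tentT a L n = 0"
  unfolding tentT_def by auto

lemma tentT_mid: "a + L \<le> n \<Longrightarrow> n < a + 2 * L \<Longrightarrow> tentT a L n = L"
  unfolding tentT_def by auto

lemma szp_shift_le:
  fixes y :: "int \<Rightarrow> complex" and k :: int
  assumes "finite S" "finite W" "\<And>n. n \<notin> W \<Longrightarrow> y n = 0"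
  shows "szp p (\<lambda>n. y (n + k)) S \<le> szp p y W"
proof -
  have "szp p (\<lambda>n. y (n + k)) S = szp p y ((\<lambda>n. n + k) ` S)"
    by (rule szp_reindex) (auto simp: inj_on_def)
  also have "\<dots> \<le> szp p y (((\<lambda>n. n + k) ` S - W) \<union> W)"
    by (rule szp_mono_set) (use assms in auto)
  also have "\<dots> \<le> szp p y ((\<lambda>n. n + k) ` S - W) + szp p y W"
    by (rule szp_union) (use assms in auto)
  also have "szp p y ((\<lambda>n. n + k) ` S - W) = 0"
    by (rule szp_zero) (use assms in auto)
  finally show ?thesis by simp
qed

lemma SH_step:
  fixes c :: "int \<Rightarrow> complex" and \<phi> :: "int \<Rightarrow> complex" and L :: int
  assumes p: "1 \<le> p" and lb: "LB p c C" and C: "0 \<le> C" and L: "L \<ge> 2" "real_of_int L \<ge> 24 * C"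
    and sol: "\<And>n. n \<in> {(j - 1) * L ..< (j + 2) * L} \<Longrightarrow> Bop c \<phi> n = 0"
  shows "szp p \<phi> (blk L j) \<le> max (szp p \<phi> (blk L (j - 1))) (szp p \<phi> (blk L (j + 1))) / 2"
proof -
  define a where "a = (j - 1) * L"
  define W where "W = {a ..< a + 3 * L}"
  define T where "T = tentT a L"
  define x where "x n = (of_int (T n) / of_int L) * \<phi> n" for n
  define \<phi>W where "\<phi>W n = (if n \<in> W then \<phi> n else 0)" for n
  have Lpos: "(0::real) < of_int L" using L by simp
  have blks: "blk L (j - 1) = {a ..< a + L}" "blk L j = {a + L ..< a + 2 * L}" "blk L (j + 1) = {a + 2 * L ..< a + 3 * L}"
    unfolding blk_def a_def by (auto simp: algebra_simps)
  have Wdef2: "W = {(j - 1) * L ..< (j + 2) * L}" unfolding W_def a_def by (simp add: algebra_simps)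
  have xsupp: "\<forall>n. n < a \<or> a + 3 * L - 1 < n \<longrightarrow> x n = 0"
    using L by (auto simp: x_def T_def tentT_zero)
  have lbx: "szp p x {a .. a + 3 * L - 1} \<le> C * szp p (Bop c x) {a - 1 .. a + 3 * L - 1 + 1}"
    using lb xsupp unfolding LB_def by blast
  have Wc: "{a .. a + 3 * L - 1} = W" unfolding W_def by auto
  have m1: "szp p \<phi> (blk L j) \<le> szp p x W"
  proof -
    have "szp p \<phi> (blk L j) = szp p x (blk L j)"
      by (rule szp_cong) (use Lpos in \<open>auto simp: blks x_def T_def tentT_mid\<close>)
    also have "\<dots> \<le> szp p x W" by (rule szp_mono_set) (auto simp: blks W_def)
    finally show ?thesis .
  qed
  have pw: "norm (Bop c x n) \<le> (1 / of_int L) * (norm (\<phi>W (n + 1)) + norm (\<phi>W (n - 1)))"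
    if "n \<in> {a - 1 .. a + 3 * L}" for n
  proof -
    have dec: "Bop c x n = (of_int (T n) / of_int L) * Bop c \<phi> n
        + (of_int (T (n + 1) - T n) / of_int L) * \<phi> (n + 1)
        + (of_int (T (n - 1) - T n) / of_int L) * \<phi> (n - 1)"
      unfolding Bop_def x_def by (simp add: algebra_simps add_divide_distrib diff_divide_distrib)
    have t0: "(of_int (T n) / of_int L) * Bop c \<phi> n = 0"
    proof (cases "n \<in> W")
      case True then show ?thesis using sol Wdef2 by auto
    next
      case False then have "T n = 0" using L by (auto simp: W_def T_def tentT_zero)
      then show ?thesis by simp
    qed
    have t1: "norm ((of_int (T (n + 1) - T n) / of_int L) * \<phi> (n + 1)) \<le> (1 / of_int L) * norm (\<phi>W (n + 1))"
    proof (cases "n + 1 \<in> W")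
      case True
      have "\<bar>T (n + 1) - T n\<bar> \<le> 1" using L by (simp add: T_def tentT_diff)
      moreover have "norm (complex_of_int (T (n + 1) - T n)) = real_of_int \<bar>T (n + 1) - T n\<bar>"
        by (simp only: norm_of_int of_int_abs)
      ultimately have "norm (complex_of_int (T (n + 1) - T n)) \<le> 1" by simp
      moreover have "norm (of_int (T (n + 1) - T n) / of_int L :: complex) = norm (complex_of_int (T (n + 1) - T n)) / of_int L"
        using Lpos by (simp only: norm_divide norm_of_int)
      ultimately have Q: "norm (of_int (T (n + 1) - T n) / of_int L :: complex) \<le> 1 / of_int L"
        using Lpos by (simp add: divide_right_mono)
      have "norm ((of_int (T (n + 1) - T n) / of_int L :: complex) * \<phi> (n + 1))
          = norm (of_int (T (n + 1) - T n) / of_int L :: complex) * norm (\<phi> (n + 1))" by (rule norm_mult)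
      also have "\<dots> \<le> (1 / of_int L) * norm (\<phi> (n + 1))" by (rule mult_right_mono[OF Q]) simp
      finally show ?thesis using True by (simp only: \<phi>W_def if_True)
    next
      case False
      then have "T (n + 1) = 0" "T n = 0" using L by (auto simp: W_def T_def tentT_zero)
      then show ?thesis using Lpos by simp
    qed
    have t2: "norm ((of_int (T (n - 1) - T n) / of_int L) * \<phi> (n - 1)) \<le> (1 / of_int L) * norm (\<phi>W (n - 1))"
    proof (cases "n - 1 \<in> W")
      case True
      have "\<bar>T (n - 1) - T n\<bar> \<le> 1" using L by (simp add: T_def tentT_diff')
      moreover have "norm (complex_of_int (T (n - 1) - T n)) = real_of_int \<bar>T (n - 1) - T n\<bar>"
        by (simp only: norm_of_int of_int_abs)
      ultimately have "norm (complex_of_int (T (n - 1) - T n)) \<le> 1" by simp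
      moreover have "norm (of_int (T (n - 1) - T n) / of_int L :: complex) = norm (complex_of_int (T (n - 1) - T n)) / of_int L"
        using Lpos by (simp only: norm_divide norm_of_int)
      ultimately have Q: "norm (of_int (T (n - 1) - T n) / of_int L :: complex) \<le> 1 / of_int L"
        using Lpos by (simp add: divide_right_mono)
      have "norm ((of_int (T (n - 1) - T n) / of_int L :: complex) * \<phi> (n - 1))
          = norm (of_int (T (n - 1) - T n) / of_int L :: complex) * norm (\<phi> (n - 1))" by (rule norm_mult)
      also have "\<dots> \<le> (1 / of_int L) * norm (\<phi> (n - 1))" by (rule mult_right_mono[OF Q]) simp
      finally show ?thesis using True by (simp only: \<phi>W_def if_True)
    next
      case False
      then have "T (n - 1) = 0" "T n = 0" using L by (auto simp: W_def T_def tentT_zero)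
      then show ?thesis using Lpos by simp
    qed
    have "norm (Bop c x n) \<le> norm ((of_int (T (n + 1) - T n) / of_int L) * \<phi> (n + 1))
         + norm ((of_int (T (n - 1) - T n) / of_int L) * \<phi> (n - 1))"
      unfolding dec t0 by (simp add: norm_triangle_ineq)
    also have "\<dots> \<le> (1 / of_int L) * norm (\<phi>W (n + 1)) + (1 / of_int L) * norm (\<phi>W (n - 1))"
      using t1 t2 by linarith
    finally show ?thesis by (simp add: distrib_left)
  qed
  define S where "S = {a - 1 .. a + 3 * L}"
  have finS: "finite S" "finite W" unfolding S_def W_def by auto
  have zW: "\<And>n. n \<notin> W \<Longrightarrow> \<phi>W n = 0" unfolding \<phi>W_def by auto
  have sB: "szp p (Bop c x) S \<le> (2 / of_int L) * (2 * szp p \<phi> W)"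
  proof -
    define y1 where "y1 n = complex_of_real (norm (\<phi>W (n + 1)))" for n
    define y2 where "y2 n = complex_of_real (norm (\<phi>W (n - 1)))" for n
    have "szp p (Bop c x) S \<le> szp p (\<lambda>n. complex_of_real (1 / of_int L) * (y1 n + y2 n)) S"
    proof (rule szp_mono_fun[OF finS(1) p])
      fix n assume "n \<in> S"
      then have "norm (Bop c x n) \<le> (1 / of_int L) * (norm (\<phi>W (n + 1)) + norm (\<phi>W (n - 1)))"
        using pw S_def by auto
      also have "\<dots> = norm (complex_of_real (1 / of_int L) * (y1 n + y2 n))"
        using Lpos unfolding y1_def y2_def norm_mult
        by (simp del: of_real_add add: of_real_add[symmetric] abs_of_nonneg norm_divide)
      finally show "norm (Bop c x n) \<le> norm (complex_of_real (1 / of_int L) * (y1 n + y2 n))" .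
    qed
    also have "\<dots> = (1 / of_int L) powr dg p * szp p (\<lambda>n. y1 n + y2 n) S"
      using szp_scale[OF finS(1) p, of "complex_of_real (1 / of_int L)" "\<lambda>n. y1 n + y2 n"] Lpos
      by (simp add: norm_divide)
    also have "\<dots> \<le> (1 / of_int L) powr dg p * (2 powr dg p * (szp p y1 S + szp p y2 S))"
      by (rule mult_left_mono[OF szp_add[OF finS(1) p]]) simp
    also have "szp p y1 S \<le> szp p \<phi>W W"
    proof -
      have "szp p y1 S = szp p (\<lambda>n. \<phi>W (n + 1)) S" by (rule szp_norm_eq) (simp add: y1_def)
      also have "\<dots> \<le> szp p \<phi>W W" by (rule szp_shift_le[OF finS zW])
      finally show ?thesis .
    qed
    also have "szp p y2 S \<le> szp p \<phi>W W"
    proof -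
      have "szp p y2 S = szp p (\<lambda>n. \<phi>W (n + (-1))) S" by (rule szp_norm_eq) (simp add: y2_def)
      also have "\<dots> \<le> szp p \<phi>W W" by (rule szp_shift_le[OF finS zW])
      finally show ?thesis .
    qed
    also have "szp p \<phi>W W = szp p \<phi> W" by (rule szp_cong) (simp add: \<phi>W_def)
    also have "(1 / of_int L) powr dg p * (2 powr dg p * (szp p \<phi> W + szp p \<phi> W))
        = (2 / of_int L) powr dg p * (2 * szp p \<phi> W)"
      using Lpos by (simp add: powr_mult[symmetric] algebra_simps)
    also have "\<dots> \<le> (2 / of_int L) * (2 * szp p \<phi> W)"
    proof (rule mult_right_mono)
      show "(2 / real_of_int L) powr dg p \<le> 2 / real_of_int L"
        by (rule powr_le_self) (use L dg_ge1[OF p] in auto)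
      show "0 \<le> 2 * szp p \<phi> W" using szp_nonneg[OF finS(2)] by simp
    qed
    finally show ?thesis by (simp add: mult_left_mono)
  qed
  have Wsplit: "szp p \<phi> W \<le> szp p \<phi> (blk L (j - 1)) + szp p \<phi> (blk L j) + szp p \<phi> (blk L (j + 1))"
  proof -
    have "W = (blk L (j - 1) \<union> blk L j) \<union> blk L (j + 1)" unfolding blks W_def by auto
    then have "szp p \<phi> W \<le> szp p \<phi> (blk L (j - 1) \<union> blk L j) + szp p \<phi> (blk L (j + 1))"
      using szp_union[of "blk L (j - 1) \<union> blk L j" "blk L (j + 1)" p \<phi>] by (simp add: blks)
    also have "szp p \<phi> (blk L (j - 1) \<union> blk L j) \<le> szp p \<phi> (blk L (j - 1)) + szp p \<phi> (blk L j)"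
      by (rule szp_union) (simp_all add: blks)
    finally show ?thesis by simp
  qed
  define m0 where "m0 = szp p \<phi> (blk L (j - 1))"
  define m1 where "m1 = szp p \<phi> (blk L j)"
  define m2 where "m2 = szp p \<phi> (blk L (j + 1))"
  have "m1 \<le> C * ((2 / of_int L) * (2 * (m0 + m1 + m2)))"
  proof -
    have "m1 \<le> szp p x W" using m1 m1_def by simp
    also have "\<dots> \<le> C * szp p (Bop c x) S" using lbx Wc S_def by simp
    also have "\<dots> \<le> C * ((2 / of_int L) * (2 * szp p \<phi> W))" by (rule mult_left_mono[OF sB C])
    also have "\<dots> \<le> C * ((2 / of_int L) * (2 * (m0 + m1 + m2)))"
      using Wsplit Lpos C unfolding m0_def m1_def m2_def
      by (intro mult_left_mono) auto
    finally show ?thesis .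
  qed
  also have "\<dots> = (4 * C / of_int L) * (m0 + m1 + m2)" by (simp add: field_simps)
  also have "\<dots> \<le> (1 / 6) * (m0 + m1 + m2)"
  proof (rule mult_right_mono)
    show "4 * C / real_of_int L \<le> 1 / 6" using L Lpos by (simp add: field_simps)
    show "0 \<le> m0 + m1 + m2" unfolding m0_def m1_def m2_def by (intro add_nonneg_nonneg szp_nonneg) (auto simp: blks)
  qed
  finally have key: "m1 \<le> (1 / 6) * (m0 + m1 + m2)" .
  have nn: "0 \<le> m0" "0 \<le> m2" unfolding m0_def m2_def by (auto intro!: szp_nonneg simp: blks)
  have "m1 \<le> max m0 m2 / 2"
  proof -
    have "m0 \<le> max m0 m2" "m2 \<le> max m0 m2" by auto
    then show ?thesis using key nn unfolding distrib_left by linarith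
  qed
  then show ?thesis unfolding m0_def m1_def m2_def .
qed

primrec solF :: "(int \<Rightarrow> complex) \<Rightarrow> (int \<Rightarrow> complex) \<Rightarrow> complex \<Rightarrow> complex \<Rightarrow> nat \<Rightarrow> complex \<times> complex" where
  "solF c f a b 0 = (a, b)"
| "solF c f a b (Suc k) = (snd (solF c f a b k),
     f (int k + 1) - fst (solF c f a b k) - c (int k + 1) * snd (solF c f a b k))"

primrec solB :: "(int \<Rightarrow> complex) \<Rightarrow> (int \<Rightarrow> complex) \<Rightarrow> complex \<Rightarrow> complex \<Rightarrow> nat \<Rightarrow> complex \<times> complex" where
  "solB c f a b 0 = (a, b)"
| "solB c f a b (Suc k) = (f (- int k) - snd (solB c f a b k) - c (- int k) * fst (solB c f a b k),
     fst (solB c f a b k))"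

definition solx :: "(int \<Rightarrow> complex) \<Rightarrow> (int \<Rightarrow> complex) \<Rightarrow> complex \<Rightarrow> complex \<Rightarrow> int \<Rightarrow> complex" where
  "solx c f a b n = (if 0 \<le> n then fst (solF c f a b (nat n)) else fst (solB c f a b (nat (- n))))"

lemma solx_pos: "solx c f a b (int k) = fst (solF c f a b k)"
  unfolding solx_def by simp

lemma solx_pos1: "solx c f a b (int k + 1) = snd (solF c f a b k)"
proof -
  have "solx c f a b (int k + 1) = solx c f a b (int (Suc k))" by (metis of_nat_Suc add.commute)
  also have "\<dots> = snd (solF c f a b k)" unfolding solx_pos by simp
  finally show ?thesis .
qed

lemma solx_neg: "solx c f a b (- int k) = fst (solB c f a b k)"
proof (cases "k = 0")
  case True then show ?thesis by (simp add: solx_def)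
next
  case False
  then have "\<not> 0 \<le> - int k" by simp
  then show ?thesis unfolding solx_def by (simp del: solB.simps)
qed

lemma solx_neg1: "solx c f a b (- int k + 1) = snd (solB c f a b k)"
proof (cases k)
  case 0 then show ?thesis unfolding solx_def by simp
next
  case (Suc k')
  then have "- int k + 1 = - int k'" by simp
  then show ?thesis using Suc solx_neg[of c f a b k'] by simp
qed

lemma solx_eq: "Bop c (solx c f a b) n = f n"
proof (cases "1 \<le> n")
  case True
  define k where "k = nat (n - 1)"
  have k: "n = int k + 1" using True unfolding k_def by simp
  have e1: "solx c f a b (n + 1) = snd (solF c f a b (Suc k))"
    using solx_pos1[of c f a b "Suc k"] k by (simp add: add.commute)
  have e2: "solx c f a b (n - 1) = fst (solF c f a b k)" using solx_pos[of c f a b k] k by simp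
  have e3: "solx c f a b n = snd (solF c f a b k)" using solx_pos1[of c f a b k] k by simp
  show ?thesis unfolding Bop_def e1 e2 e3 using k by simp
next
  case False
  define k where "k = nat (- n)"
  have k: "n = - int k" using False unfolding k_def by simp
  have e1: "solx c f a b (n + 1) = snd (solB c f a b k)" using solx_neg1[of c f a b k] k by simp
  have "n - 1 = - int (Suc k)" using k by simp
  then have e2: "solx c f a b (n - 1) = fst (solB c f a b (Suc k))"
    by (simp only: solx_neg)
  have e3: "solx c f a b n = fst (solB c f a b k)" using solx_neg[of c f a b k] k by simp
  show ?thesis unfolding Bop_def e1 e2 e3 using k by simp
qed

lemma solx_01: "solx c f a b 0 = a" "solx c f a b 1 = b"
  unfolding solx_def by simp_all

lemma Bop_diff: "Bop c (\<lambda>n. x n - y n) n = Bop c x n - Bop c y n"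
  unfolding Bop_def by (simp add: algebra_simps)

lemma Bop_add: "Bop c (\<lambda>n. x n + y n) n = Bop c x n + Bop c y n"
  unfolding Bop_def by (simp add: algebra_simps)

lemma Bop_scale: "Bop c (\<lambda>n. t * x n) n = t * Bop c x n"
  unfolding Bop_def by (simp add: algebra_simps)

lemma Bop_zero: "Bop c (\<lambda>n. 0) n = 0"
  unfolding Bop_def by simp

lemma uniq_right:
  assumes "\<And>n. s + 1 \<le> n \<Longrightarrow> Bop c h n = 0" "h s = 0" "h (s + 1) = 0"
  shows "s \<le> n \<Longrightarrow> h n = 0"
proof -
  have "h (s + int k) = 0 \<and> h (s + int k + 1) = 0" for k
  proof (induction k)
    case 0 then show ?case using assms by simp
  next
    case (Suc k)
    define m where "m = s + int k"
    have "Bop c h (m + 1) = 0" using assms(1) unfolding m_def by simp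
    then have "h (m + 1 + 1) + h m + c (m + 1) * h (m + 1) = 0" unfolding Bop_def by simp
    moreover have "h m = 0" "h (m + 1) = 0" using Suc unfolding m_def by auto
    ultimately have "h (m + 1 + 1) = 0" by simp
    moreover have eq: "s + int (Suc k) = m + 1" unfolding m_def by simp
    ultimately show ?case using \<open>h (m + 1) = 0\<close> unfolding eq by simp
  qed
  moreover assume "s \<le> n"
  then have "n = s + int (nat (n - s))" by simp
  ultimately show "h n = 0" by metis
qed

lemma uniq_left:
  assumes "\<And>n. n \<le> s \<Longrightarrow> Bop c h n = 0" "h s = 0" "h (s + 1) = 0"
  shows "n \<le> s + 1 \<Longrightarrow> h n = 0"
proof -
  have A: "h (s - int k) = 0 \<and> h (s - int k + 1) = 0" for k
  proof (induction k)
    case 0 then show ?case using assms by simp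
  next
    case (Suc k)
    define m where "m = s - int k"
    have "Bop c h m = 0" using assms(1) unfolding m_def by simp
    then have "h (m + 1) + h (m - 1) + c m * h m = 0" unfolding Bop_def by simp
    moreover have "h m = 0" "h (m + 1) = 0" using Suc unfolding m_def by auto
    ultimately have "h (m - 1) = 0" by simp
    moreover have eq: "s - int (Suc k) = m - 1" "s - int (Suc k) + 1 = m" unfolding m_def by simp_all
    ultimately show ?case using \<open>h m = 0\<close> unfolding eq by simp
  qed
  have B: "h (s + 1 - int k) = 0" for k
  proof (cases k)
    case 0 then show ?thesis using assms by simp
  next
    case (Suc k')
    then have eq: "s + 1 - int k = s - int k'" by simp
    show ?thesis using A[of k'] unfolding eq by simp
  qed
  assume "n \<le> s + 1"
  then have "n = s + 1 - int (nat (s + 1 - n))" by simp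
  then show "h n = 0" using B by metis
qed

lemma uniq:
  assumes "\<And>n. Bop c h n = 0" "h s = 0" "h (s + 1) = 0"
  shows "h n = 0"
proof (cases "s \<le> n")
  case True then show ?thesis using uniq_right[of s c h n] assms by auto
next
  case False then show ?thesis using uniq_left[of s c h n] assms by auto
qed

lemma uniq2:
  assumes "\<And>n. Bop c x n = Bop c y n" "x s = y s" "x (s + 1) = y (s + 1)"
  shows "x = y"
proof
  fix n
  have "(\<lambda>n. x n - y n) n = 0"
    by (rule uniq[of c _ s]) (use assms in \<open>simp_all add: Bop_diff\<close>)
  then show "x n = y n" by simp
qed

lemma sol_exists:
  "\<exists>x. (\<forall>n. Bop c x n = f n) \<and> x s = a \<and> x (s + 1) = b"
proof -
  define x' where "x' = solx (\<lambda>n. c (n + s)) (\<lambda>n. f (n + s)) a b"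
  define x where "x n = x' (n - s)" for n
  have "Bop c x n = f n" for n
  proof -
    have "Bop c x n = Bop (\<lambda>n. c (n + s)) x' (n - s)"
      unfolding Bop_def x_def by (simp add: algebra_simps)
    also have "\<dots> = f n" unfolding x'_def solx_eq by simp
    finally show ?thesis .
  qed
  moreover have "x s = a" "x (s + 1) = b" unfolding x_def x'_def by (simp_all add: solx_01)
  ultimately show ?thesis by blast
qed

definition Wr :: "(int \<Rightarrow> complex) \<Rightarrow> (int \<Rightarrow> complex) \<Rightarrow> int \<Rightarrow> complex" where
  "Wr u v n = u n * v (n + 1) - u (n + 1) * v n"

lemma Wr_step:
  assumes "\<And>n. Bop c u n = 0" "\<And>n. Bop c v n = 0"
  shows "Wr u v (n + 1) = Wr u v n"
proof -
  have "u (n + 1 + 1) + u n + c (n + 1) * u (n + 1) = 0" using assms(1)[of "n + 1"] unfolding Bop_def by simp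
  then have u: "u (n + 1 + 1) = - u n - c (n + 1) * u (n + 1)" by algebra
  have "v (n + 1 + 1) + v n + c (n + 1) * v (n + 1) = 0" using assms(2)[of "n + 1"] unfolding Bop_def by simp
  then have v: "v (n + 1 + 1) = - v n - c (n + 1) * v (n + 1)" by algebra
  show ?thesis unfolding Wr_def u v by (simp add: algebra_simps)
qed

lemma Wr_const:
  assumes "\<And>n. Bop c u n = 0" "\<And>n. Bop c v n = 0"
  shows "Wr u v n = Wr u v m"
proof -
  have A: "Wr u v (m + int k) = Wr u v m" for k
  proof (induction k)
    case (Suc k)
    have "Wr u v (m + int k + 1) = Wr u v (m + int k)" by (rule Wr_step[OF assms])
    moreover have eq: "m + int (Suc k) = m + int k + 1" by simp
    ultimately show ?case using Suc unfolding eq by simp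
  qed simp
  have B: "Wr u v (m - int k) = Wr u v m" for k
  proof (induction k)
    case (Suc k)
    have "Wr u v (m - int (Suc k) + 1) = Wr u v (m - int (Suc k))" by (rule Wr_step[OF assms])
    then show ?case using Suc by simp
  qed simp
  show ?thesis
  proof (cases "m \<le> n")
    case True
    then have "n = m + int (nat (n - m))" by simp
    then show ?thesis using A by metis
  next
    case False
    then have "n = m - int (nat (m - n))" by simp
    then show ?thesis using B by metis
  qed
qed

lemma transfer_bound:
  assumes sol: "\<And>n. Bop c h n = 0" and M: "\<And>n. norm (c n) \<le> M"
    and h0: "norm (h s) \<le> 1" "norm (h (s + 1)) \<le> 1"
  shows "norm (h (s + int r)) \<le> (2 + M) ^ r"
proof -
  have M0: "0 \<le> M" using M[of 0] norm_ge_zero[of "c 0"] by linarith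
  have "norm (h (s + int r)) \<le> (2 + M) ^ r \<and> norm (h (s + int r + 1)) \<le> (2 + M) ^ r" for r
  proof (induction r)
    case 0 then show ?case using h0 by simp
  next
    case (Suc r)
    let ?n = "s + int r"
    have "h (?n + 1 + 1) + h ?n + c (?n + 1) * h (?n + 1) = 0" using sol[of "?n + 1"] unfolding Bop_def by simp
    then have e: "h (?n + 1 + 1) = - h ?n - c (?n + 1) * h (?n + 1)" by algebra
    have "norm (h (?n + 1 + 1)) \<le> norm (h ?n) + norm (c (?n + 1)) * norm (h (?n + 1))"
      unfolding e by (metis norm_minus_cancel norm_mult norm_triangle_ineq4)
    also have "\<dots> \<le> (2 + M) ^ r + M * (2 + M) ^ r"
      using Suc M[of "?n + 1"] M0 by (intro add_mono mult_mono) auto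
    also have "\<dots> \<le> (2 + M) ^ Suc r" using M0 by (simp add: algebra_simps)
    finally have a: "norm (h (?n + 1 + 1)) \<le> (2 + M) ^ Suc r" .
    have "(2 + M) ^ r \<le> (2 + M) ^ Suc r" by (rule power_increasing) (use M0 in auto)
    then have b: "norm (h (?n + 1)) \<le> (2 + M) ^ Suc r"
      using Suc by linarith
    have eq: "s + int (Suc r) = ?n + 1" by simp
    show ?case using a b unfolding eq by simp
  qed
  then show ?thesis by blast
qed

lemma LB_reflect:
  assumes "LB p c C"
  shows "LB p (\<lambda>n. c (- n)) C"
  unfolding LB_def
proof (intro allI impI)
  fix x :: "int \<Rightarrow> complex" and a b
  assume supp: "\<forall>n. n < a \<or> b < n \<longrightarrow> x n = 0"
  define x' where "x' n = x (- n)" for n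
  have supp': "\<forall>n. n < - b \<or> - a < n \<longrightarrow> x' n = 0" using supp unfolding x'_def by auto
  have i1: "szp p x {a..b} = szp p x' {- b..- a}"
  proof -
    have "szp p x' {- b..- a} = szp p x (uminus ` {- b..- a})"
      unfolding x'_def by (rule szp_reindex) (simp add: inj_on_def)
    also have "uminus ` {- b..- a} = {a..b}" by (auto simp: image_iff intro!: bexI[of _ "- _"])
    finally show ?thesis by simp
  qed
  have i2: "szp p (Bop (\<lambda>n. c (- n)) x) {a - 1..b + 1} = szp p (Bop c x') {- b - 1..- a + 1}"
  proof -
    have "szp p (Bop c x') {- b - 1..- a + 1} = szp p (\<lambda>n. Bop c x' (- n)) (uminus ` {- b - 1..- a + 1})"
    proof -
      have "szp p (\<lambda>n. Bop c x' (- n)) (uminus ` {- b - 1..- a + 1})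
          = szp p (\<lambda>n. Bop c x' (- (- n))) {- b - 1..- a + 1}"
        by (rule szp_reindex[symmetric]) (simp add: inj_on_def)
      then show ?thesis by simp
    qed
    also have "uminus ` {- b - 1..- a + 1} = {a - 1..b + 1}" by (auto simp: image_iff intro!: bexI[of _ "- _"])
    also have "(\<lambda>n. Bop c x' (- n)) = Bop (\<lambda>n. c (- n)) x"
      unfolding Bop_def x'_def by (auto simp: algebra_simps)
    finally show ?thesis by simp
  qed
  have "szp p x' {- b..- a} \<le> C * szp p (Bop c x') {- b - 1..- a + 1}"
    using assms supp' unfolding LB_def by (metis diff_minus_eq_add uminus_add_conv_diff)
  then show "szp p x {a..b} \<le> C * szp p (Bop (\<lambda>n. c (- n)) x) {a - 1..b + 1}"
    using i1 i2 by simp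
qed

definition SHat :: "(int \<Rightarrow> real) \<Rightarrow> int \<Rightarrow> bool" where
  "SHat m i \<longleftrightarrow> m i \<le> max (m (i - 1)) (m (i + 1)) / 2"

lemma grow_right:
  assumes sh: "\<And>i. j0 < i \<Longrightarrow> i \<le> j0 + int k \<Longrightarrow> SHat m i"
    and st: "m j0 \<le> m (j0 + 1)" and pos: "0 < m (j0 + 1)"
  shows "2 ^ k * m (j0 + 1) \<le> m (j0 + 1 + int k)"
proof -
  have "m (j0 + int k') \<le> m (j0 + 1 + int k') \<and> 2 ^ k' * m (j0 + 1) \<le> m (j0 + 1 + int k')"
    if "k' \<le> k" for k'
    using that
  proof (induction k')
    case 0 then show ?case using st by simp
  next
    case (Suc k')
    define i where "i = j0 + 1 + int k'"
    have IH: "m (i - 1) \<le> m i" "2 ^ k' * m (j0 + 1) \<le> m i"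
      using Suc unfolding i_def by (auto simp: algebra_simps)
    have "0 < 2 ^ k' * m (j0 + 1)" using pos by simp
    then have ipos: "0 < m i" using IH(2) by linarith
    have "SHat m i" using sh Suc unfolding i_def by auto
    then have s: "m i \<le> max (m (i - 1)) (m (i + 1)) / 2" unfolding SHat_def .
    have "m (i + 1) > m (i - 1)"
    proof (rule ccontr)
      assume "\<not> m (i + 1) > m (i - 1)"
      then have "m i \<le> m (i - 1) / 2" using s by (simp add: max_def)
      then show False using IH(1) ipos by linarith
    qed
    then have "m i \<le> m (i + 1) / 2" using s by (simp add: max_def)
    then have "2 * m i \<le> m (i + 1)" by linarith
    moreover have "2 ^ Suc k' * m (j0 + 1) = 2 * (2 ^ k' * m (j0 + 1))" by simp
    ultimately have "2 ^ Suc k' * m (j0 + 1) \<le> m (i + 1)" using IH(2) by linarith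
    moreover have "m i \<le> m (i + 1)" using \<open>2 * m i \<le> m (i + 1)\<close> ipos by linarith
    moreover have eq: "j0 + int (Suc k') = i" "j0 + 1 + int (Suc k') = i + 1" unfolding i_def by simp_all
    ultimately show ?case unfolding eq by simp
  qed
  then show ?thesis by simp
qed

lemma grow_left:
  assumes sh: "\<And>i. j0 - int k \<le> i \<Longrightarrow> i < j0 \<Longrightarrow> SHat m i"
    and st: "m j0 \<le> m (j0 - 1)" and pos: "0 < m (j0 - 1)"
  shows "2 ^ k * m (j0 - 1) \<le> m (j0 - 1 - int k)"
proof -
  define m' where "m' j = m (- j)" for j
  have sh': "SHat m' i" if "- j0 < i" "i \<le> - j0 + int k" for i
  proof -
    have "SHat m (- i)" using sh that by auto
    then show ?thesis unfolding SHat_def m'_def by (simp add: max.commute)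
  qed
  have "2 ^ k * m' (- j0 + 1) \<le> m' (- j0 + 1 + int k)"
    by (rule grow_right[OF sh']) (use st pos in \<open>auto simp: m'_def\<close>)
  then show ?thesis unfolding m'_def by (simp add: algebra_simps)
qed

lemma local_small:
  assumes j: "J1 \<le> j" "j \<le> J2"
    and sh: "\<And>i. J1 \<le> i \<Longrightarrow> i \<le> J2 \<Longrightarrow> SHat m i"
    and nn: "\<And>i. 0 \<le> m i" and K: "m (J1 - 1) \<le> K" "m (J2 + 1) \<le> K"
  shows "2 ^ nat (min (j - J1) (J2 - j)) * m j \<le> K"
proof (cases "m j = 0")
  case True then show ?thesis using K nn[of "J1 - 1"] by simp
next
  case False
  then have mpos: "0 < m j" using nn[of j] by simp
  have s: "m j \<le> max (m (j - 1)) (m (j + 1)) / 2" using sh j unfolding SHat_def by auto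
  show ?thesis
  proof (cases "m (j - 1) \<le> m (j + 1)")
    case True
    then have a: "2 * m j \<le> m (j + 1)" using s by (simp add: max_def)
    define k where "k = nat (J2 - j)"
    have "2 ^ k * m (j + 1) \<le> m (j + 1 + int k)"
      by (rule grow_right) (use sh j a mpos in \<open>auto simp: k_def\<close>)
    also have "j + 1 + int k = J2 + 1" using j unfolding k_def by simp
    finally have "2 ^ k * m (j + 1) \<le> K" using K by simp
    moreover have "2 ^ k * m j \<le> 2 ^ k * m (j + 1)" using a mpos by (intro mult_left_mono) auto
    moreover have "(2::real) ^ nat (min (j - J1) (J2 - j)) \<le> 2 ^ k"
      unfolding k_def by (rule power_increasing) auto
    then have "2 ^ nat (min (j - J1) (J2 - j)) * m j \<le> 2 ^ k * m j"
      by (rule mult_right_mono) (use mpos in auto)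
    ultimately show ?thesis by linarith
  next
    case False
    then have a: "2 * m j \<le> m (j - 1)" using s by (simp add: max_def)
    define k where "k = nat (j - J1)"
    have "2 ^ k * m (j - 1) \<le> m (j - 1 - int k)"
      by (rule grow_left) (use sh j a mpos in \<open>auto simp: k_def\<close>)
    also have "j - 1 - int k = J1 - 1" using j unfolding k_def by simp
    finally have "2 ^ k * m (j - 1) \<le> K" using K by simp
    moreover have "2 ^ k * m j \<le> 2 ^ k * m (j - 1)" using a mpos by (intro mult_left_mono) auto
    moreover have "(2::real) ^ nat (min (j - J1) (J2 - j)) \<le> 2 ^ k"
      unfolding k_def by (rule power_increasing) auto
    then have "2 ^ nat (min (j - J1) (J2 - j)) * m j \<le> 2 ^ k * m j"
      by (rule mult_right_mono) (use mpos in auto)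
    ultimately show ?thesis by linarith
  qed
qed

lemma powr_le_cancel: "0 < d \<Longrightarrow> 0 \<le> a \<Longrightarrow> 0 \<le> e \<Longrightarrow> a powr d \<le> e powr d \<Longrightarrow> (a::real) \<le> e"
  using powr_less_mono2[of d e a] by linarith

lemma blk_mem: "0 < L \<Longrightarrow> n \<in> blk L (n div L)"
proof -
  assume L: "0 < L"
  have e: "n div L * L + n mod L = n" by simp
  have "0 \<le> n mod L" "n mod L < L" using L by simp_all
  then have "n div L * L \<le> n" "n < n div L * L + L" using e by linarith+
  then show ?thesis unfolding blk_def by (simp add: algebra_simps)
qed

lemma blk_finite[simp]: "finite (blk L j)"
  unfolding blk_def by simp

lemma blk_card: "0 \<le> L \<Longrightarrow> card (blk L j) = nat L"
  unfolding blk_def by (simp add: algebra_simps)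

locale setting =
  fixes p :: ereal and c :: "int \<Rightarrow> complex" and C M :: real and L :: int
  assumes p: "1 \<le> p" and lb: "LB p c C" and C: "0 \<le> C" and M: "\<And>n. norm (c n) \<le> M"
    and L: "2 \<le> L" and L24: "24 * C \<le> real_of_int L"
begin

definition ms :: "(int \<Rightarrow> complex) \<Rightarrow> int \<Rightarrow> real" where
  "ms \<phi> j = szp p \<phi> (blk L j)"

lemma M0: "0 \<le> M" using M[of 0] norm_ge_zero[of "c 0"] by linarith

lemma Lpos: "0 < L" using L by simp

lemma dpos: "0 < dg p" using dg_pos[OF p] .

lemma SH_local:
  assumes "\<And>n. n \<in> {(j - 1) * L ..< (j + 2) * L} \<Longrightarrow> Bop c \<phi> n = 0"
  shows "SHat (ms \<phi>) j"
  unfolding SHat_def ms_def using SH_step[OF p lb C L L24 assms] by simp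

lemma SH_global: "(\<And>n. Bop c \<phi> n = 0) \<Longrightarrow> SHat (ms \<phi>) j"
  by (rule SH_local) auto

lemma ms_nonneg: "0 \<le> ms \<phi> j"
  unfolding ms_def by (rule szp_nonneg) simp

lemma pt_ms: "norm (\<phi> n) powr dg p \<le> ms \<phi> (n div L)"
  unfolding ms_def by (rule szp_point[OF _ blk_mem[OF Lpos] p]) simp

lemma pt_ms': "n \<in> blk L j \<Longrightarrow> norm (\<phi> n) powr dg p \<le> ms \<phi> j"
  unfolding ms_def by (rule szp_point[OF _ _ p]) simp_all

lemma ms_bound:
  assumes "\<And>n. n \<in> blk L j \<Longrightarrow> norm (\<phi> n) \<le> B" "0 \<le> B"
  shows "ms \<phi> j \<le> real_of_int L * B powr dg p"
proof -
  have "ms \<phi> j \<le> real (card (blk L j)) * B powr dg p"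
    unfolding ms_def by (rule szp_le_card[OF _ p assms(2)]) (use assms in auto)
  then show ?thesis using blk_card[of L j] L by simp
qed

lemma small_from_ms:
  assumes "norm a powr dg p \<le> m" "m \<le> e powr dg p" "0 \<le> e"
  shows "norm a \<le> e"
  by (rule powr_le_cancel[OF dpos]) (use assms in auto)

lemma bounded_zero:
  assumes sol: "\<And>n. Bop c h n = 0" and B: "\<And>n. norm (h n) \<le> B"
  shows "h n = 0"
proof -
  have B0: "0 \<le> B" using B[of 0] norm_ge_zero[of "h 0"] by linarith
  define K where "K = real_of_int L * B powr dg p"
  have mK: "ms h j \<le> K" for j unfolding K_def by (rule ms_bound) (use B B0 in auto)
  have z: "ms h j = 0" for j
  proof (rule ccontr)
    assume "ms h j \<noteq> 0"
    then have pos: "0 < ms h j" using ms_nonneg[of h j] by simp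
    have "\<exists>n::nat. K / ms h j < 2 ^ n" by (rule real_arch_pow) simp
    then obtain N :: nat where N: "K / ms h j < 2 ^ N" by blast
    have "2 ^ nat (min (j - (j - int N)) (j + int N - j)) * ms h j \<le> K"
      by (rule local_small[of "j - int N" j "j + int N"]) (use SH_global[OF sol] ms_nonneg mK in auto)
    then have "2 ^ N * ms h j \<le> K" by simp
    moreover have "K < 2 ^ N * ms h j" using N pos by (simp add: divide_less_eq mult.commute)
    ultimately show False by linarith
  qed
  have "norm (h n) \<le> 0"
    by (rule small_from_ms[OF pt_ms]) (use z dpos in auto)
  then show ?thesis by simp
qed

lemma psi_exists:
  "\<exists>\<psi>. (\<forall>n. Bop c \<psi> n = 0) \<and> (\<psi> 0 \<noteq> 0 \<or> \<psi> 1 \<noteq> 0) \<and> (\<forall>\<epsilon>>0. \<exists>N. \<forall>n\<ge>N. norm (\<psi> n) \<le> \<epsilon>)"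
proof -
  obtain e1 where e1: "\<And>n. Bop c e1 n = 0" "e1 0 = 1" "e1 1 = 0"
    using sol_exists[of c "\<lambda>_. 0" 0 1 0] by auto
  obtain e2 where e2: "\<And>n. Bop c e2 n = 0" "e2 0 = 0" "e2 1 = 1"
    using sol_exists[of c "\<lambda>_. 0" 0 0 1] by auto
  define Sf where "Sf t = (\<lambda>n. fst t * e1 n + snd t * e2 n)" for t :: "complex \<times> complex"
  have Sf_sol: "Bop c (Sf t) n = 0" for t n
    unfolding Sf_def Bop_add Bop_scale e1 e2 by simp
  have Sf_data: "Sf t 0 = fst t" "Sf t 1 = snd t" for t unfolding Sf_def using e1 e2 by simp_all
  have Sf_uniq: "h = Sf (h 0, h 1)" if "\<And>n. Bop c h n = 0" for h
    by (rule uniq2[of c _ _ 0]) (use that Sf_sol Sf_data in auto)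
  have cont: "continuous_on UNIV (\<lambda>t. ms (Sf t) j)" for j
  proof -
    have "isCont (\<lambda>t. ms (Sf t) j) t" for t
      unfolding isCont_def ms_def
    proof (rule szp_tendsto[OF _ p])
      fix n
      show "((\<lambda>t'. Sf t' n) \<longlongrightarrow> Sf t n) (at t)"
        unfolding Sf_def by (intro tendsto_intros)
    qed simp
    then show ?thesis by (simp add: continuous_on_eq_continuous_at)
  qed
  define Ks where "Ks N = {t. norm t = 1 \<and> ms (Sf t) (int N + 1) \<le> ms (Sf t) (int N)}" for N :: nat
  have Kcomp: "compact (Ks N)" for N
  proof -
    have "Ks N = sphere 0 1 \<inter> {t. ms (Sf t) (int N + 1) \<le> ms (Sf t) (int N)}"
      unfolding Ks_def by auto
    moreover have "closed {t. ms (Sf t) (int N + 1) \<le> ms (Sf t) (int N)}"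
      by (rule closed_Collect_le[OF cont cont])
    ultimately show ?thesis by (simp add: compact_Int_closed)
  qed
  have Kstep: "Ks (Suc N) \<subseteq> Ks N" for N
  proof
    fix t assume "t \<in> Ks (Suc N)"
    moreover have eqs: "int (Suc N) + 1 = int N + 2" "int (Suc N) = int N + 1" by simp_all
    ultimately have t: "norm t = 1" "ms (Sf t) (int N + 2) \<le> ms (Sf t) (int N + 1)"
      unfolding Ks_def by (simp_all only: mem_Collect_eq eqs)
    have "ms (Sf t) (int N + 1) \<le> ms (Sf t) (int N)"
    proof (rule ccontr)
      assume a: "\<not> ?thesis"
      have "SHat (ms (Sf t)) (int N + 1)" by (rule SH_global[OF Sf_sol])
      then have "ms (Sf t) (int N + 1) \<le> max (ms (Sf t) (int N)) (ms (Sf t) (int N + 2)) / 2"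
        unfolding SHat_def by (simp add: add.assoc)
      moreover have "max (ms (Sf t) (int N)) (ms (Sf t) (int N + 2)) \<le> ms (Sf t) (int N + 1)"
        using a t(2) by simp
      ultimately have "ms (Sf t) (int N + 1) \<le> ms (Sf t) (int N + 1) / 2" by linarith
      then show False using a ms_nonneg[of "Sf t" "int N"] by linarith
    qed
    then show "t \<in> Ks N" using t unfolding Ks_def by simp
  qed
  have Kmono: "m \<le> n \<Longrightarrow> Ks n \<subseteq> Ks m" for m n
    by (rule lift_Suc_antimono_le[of Ks]) (use Kstep in auto)
  define K0 where "K0 = real_of_int L * ((2 + M) ^ nat L) powr dg p"
  have blockK0: "ms h j \<le> K0" if sol: "\<And>n. Bop c h n = 0" and h0: "norm (h (j * L)) \<le> 1" "norm (h (j * L + 1)) \<le> 1" for h j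
    unfolding K0_def
  proof (rule ms_bound)
    fix n assume "n \<in> blk L j"
    then have n: "j * L \<le> n" "n < j * L + L" unfolding blk_def by (auto simp: algebra_simps)
    define r where "r = nat (n - j * L)"
    have nr: "n = j * L + int r" "r \<le> nat L" using n unfolding r_def by auto
    have "norm (h (j * L + int r)) \<le> (2 + M) ^ r" by (rule transfer_bound[OF sol M h0])
    also have "\<dots> \<le> (2 + M) ^ nat L" by (rule power_increasing) (use nr M0 in auto)
    finally show "norm (h n) \<le> (2 + M) ^ nat L" using nr by simp
  qed (use M0 in simp)
  have Kne: "Ks N \<noteq> {}" for N
  proof
    assume E: "Ks N = {}"
    have G: "ms h (int N) < ms h (int N + 1)"
      if sol: "\<And>n. Bop c h n = 0" and nz: "h 0 \<noteq> 0 \<or> h 1 \<noteq> 0" for h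
    proof -
      define t where "t = (h 0, h 1)"
      define r where "r = norm t"
      have rpos: "0 < r" unfolding r_def t_def using nz by (auto simp: zero_prod_def)
      define t' where "t' = scaleR (1 / r) t"
      have nt': "norm t' = 1" unfolding t'_def r_def using rpos r_def by simp
      have hs: "Bop c (\<lambda>n. complex_of_real (1 / r) * h n) n = 0" for n
        by (simp only: Bop_scale sol) simp
      have "Sf t' = (\<lambda>n. complex_of_real (1 / r) * h n)"
      proof (rule uniq2[of c _ _ 0])
        show "\<And>n. Bop c (Sf t') n = Bop c (\<lambda>n. complex_of_real (1 / r) * h n) n"
          using Sf_sol hs by simp
        show "Sf t' 0 = complex_of_real (1 / r) * h 0" "Sf t' (0 + 1) = complex_of_real (1 / r) * h (0 + 1)"
          using Sf_data[of t'] unfolding t'_def t_def by (simp_all add: scaleR_conv_of_real)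
      qed
      then have msc: "ms (Sf t') j = (1 / r) powr dg p * ms h j" for j
        unfolding ms_def using szp_scale[OF _ p, of "blk L j" "complex_of_real (1 / r)" h] rpos by (simp add: norm_divide)
      have "t' \<notin> Ks N" using E by simp
      then have "\<not> ms (Sf t') (int N + 1) \<le> ms (Sf t') (int N)" using nt' unfolding Ks_def by simp
      then have "(1 / r) powr dg p * ms h (int N) < (1 / r) powr dg p * ms h (int N + 1)"
        unfolding msc by simp
      moreover have "0 < (1 / r) powr dg p" using rpos by simp
      ultimately show ?thesis by simp
    qed
    define q where "q = (1 / 4 :: real) powr dg p"
    have qpos: "0 < q" unfolding q_def by simp
    have "\<exists>n::nat. K0 / q < 2 ^ n" by (rule real_arch_pow) simp
    then obtain n0 :: nat where n0: "K0 / q < 2 ^ n0" by blast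
    define s0 where "s0 = (int N + 1 + int n0) * L"
    have small: "norm (h (int N * L)) \<le> 1 / 4 \<and> norm (h (int N * L + 1)) \<le> 1 / 4"
      if sol: "\<And>n. Bop c h n = 0" and hb: "norm (h s0) \<le> 1" "norm (h (s0 + 1)) \<le> 1"
        and hnz: "h s0 \<noteq> 0 \<or> h (s0 + 1) \<noteq> 0" for h
    proof -
      have nz: "h 0 \<noteq> 0 \<or> h 1 \<noteq> 0"
      proof (rule ccontr)
        assume "\<not> ?thesis"
        then have z: "h 0 = 0" "h (0 + 1) = 0" by auto
        have "h n = 0" for n by (rule uniq[of c h 0 n, OF sol z])
        then show False using hnz by simp
      qed
      have g: "ms h (int N) < ms h (int N + 1)" by (rule G[OF sol nz])
      have pos: "0 < ms h (int N + 1)" using g ms_nonneg[of h "int N"] by linarith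
      have "2 ^ n0 * ms h (int N + 1) \<le> ms h (int N + 1 + int n0)"
        by (rule grow_right) (use SH_global[OF sol] g pos in auto)
      also have "\<dots> \<le> K0"
        by (rule blockK0[OF sol]) (use hb in \<open>simp_all add: s0_def\<close>)
      finally have "2 ^ n0 * ms h (int N + 1) \<le> K0" .
      moreover have "K0 < 2 ^ n0 * q" using n0 qpos by (simp add: divide_less_eq)
      ultimately have "2 ^ n0 * ms h (int N + 1) < 2 ^ n0 * q" by linarith
      then have "ms h (int N + 1) < q" by (rule mult_less_cancel_left_pos[THEN iffD1, rotated]) simp
      then have mq: "ms h (int N) \<le> q" using g by linarith
      have b1: "int N * L \<in> blk L (int N)" "int N * L + 1 \<in> blk L (int N)"
        unfolding blk_def using L by (auto simp: algebra_simps)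
      show ?thesis
        using small_from_ms[OF pt_ms'[OF b1(1)] mq[unfolded q_def]]
          small_from_ms[OF pt_ms'[OF b1(2)] mq[unfolded q_def]] by simp
    qed
    obtain h1 where h1: "\<And>n. Bop c h1 n = 0" "h1 s0 = 0" "h1 (s0 + 1) = 1"
      using sol_exists[of c "\<lambda>_. 0" s0 0 1] by auto
    obtain h2 where h2: "\<And>n. Bop c h2 n = 0" "h2 s0 = 1" "h2 (s0 + 1) = 0"
      using sol_exists[of c "\<lambda>_. 0" s0 1 0] by auto
    have s1: "norm (h1 (int N * L)) \<le> 1 / 4" "norm (h1 (int N * L + 1)) \<le> 1 / 4"
      using small[OF h1(1)] h1 by auto
    have s2: "norm (h2 (int N * L)) \<le> 1 / 4" "norm (h2 (int N * L + 1)) \<le> 1 / 4"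
      using small[OF h2(1)] h2 by auto
    have "Wr h1 h2 (int N * L) = Wr h1 h2 s0" by (rule Wr_const[OF h1(1) h2(1)])
    also have "\<dots> = -1" unfolding Wr_def using h1 h2 by simp
    finally have w: "Wr h1 h2 (int N * L) = -1" .
    have "norm (Wr h1 h2 (int N * L)) \<le> norm (h1 (int N * L)) * norm (h2 (int N * L + 1))
        + norm (h1 (int N * L + 1)) * norm (h2 (int N * L))"
      unfolding Wr_def by (metis norm_mult norm_triangle_ineq4)
    also have "\<dots> \<le> (1/4) * (1/4) + (1/4) * (1/4)"
      using s1 s2 by (intro add_mono mult_mono) auto
    finally show False using w by simp
  qed
  obtain t where t: "t \<in> \<Inter> (range Ks)"
    using compact_nest[of Ks] Kcomp Kne Kmono by blast
  define \<psi> where "\<psi> = Sf t"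
  have tK: "norm t = 1" "ms \<psi> (int N + 1) \<le> ms \<psi> (int N)" for N
    using t unfolding Ks_def \<psi>_def by auto
  have half: "ms \<psi> (int N + 1) \<le> ms \<psi> (int N) / 2" for N
  proof -
    have "SHat (ms \<psi>) (int N + 1)" unfolding \<psi>_def by (rule SH_global[OF Sf_sol])
    then have "ms \<psi> (int N + 1) \<le> max (ms \<psi> (int N)) (ms \<psi> (int N + 2)) / 2"
      unfolding SHat_def by (simp add: add.assoc)
    moreover have "ms \<psi> (int N + 2) \<le> ms \<psi> (int N + 1)"
      using tK(2)[of "Suc N"] by (simp add: add.commute)
    moreover have "max (ms \<psi> (int N)) (ms \<psi> (int N + 2)) = ms \<psi> (int N)"
      using tK(2)[of N] \<open>ms \<psi> (int N + 2) \<le> ms \<psi> (int N + 1)\<close> by simp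
    ultimately show ?thesis by simp
  qed
  have dec: "ms \<psi> (int N) \<le> ms \<psi> 0 / 2 ^ N" for N
  proof (induction N)
    case (Suc N)
    have eq: "int (Suc N) = int N + 1" by simp
    have "ms \<psi> (int (Suc N)) \<le> ms \<psi> (int N) / 2" unfolding eq by (rule half)
    also have "\<dots> \<le> ms \<psi> 0 / 2 ^ N / 2" using Suc by simp
    finally show ?case by (simp add: field_simps)
  qed simp
  have PD: "\<exists>N. \<forall>n\<ge>N. norm (\<psi> n) \<le> \<epsilon>" if e: "\<epsilon> > 0" for \<epsilon>
  proof -
    have qe: "0 < \<epsilon> powr dg p" using e by simp
    have "\<exists>n::nat. ms \<psi> 0 / \<epsilon> powr dg p < 2 ^ n" by (rule real_arch_pow) simp
    then obtain N0 :: nat where N0: "ms \<psi> 0 / \<epsilon> powr dg p < 2 ^ N0" by blast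
    have "norm (\<psi> n) \<le> \<epsilon>" if n: "n \<ge> int N0 * L" for n
    proof -
      define j where "j = n div L"
      have "int N0 * L div L \<le> n div L" by (rule zdiv_mono1[OF n Lpos])
      then have jN: "int N0 \<le> j" unfolding j_def using Lpos by simp
      then have j0: "j = int (nat j)" "N0 \<le> nat j" by auto
      have "ms \<psi> j \<le> ms \<psi> 0 / 2 ^ nat j" using dec[of "nat j"] j0 by simp
      also have "\<dots> \<le> ms \<psi> 0 / 2 ^ N0"
        using j0 ms_nonneg[of \<psi> 0] by (intro divide_left_mono power_increasing) auto
      also have "\<dots> \<le> \<epsilon> powr dg p"
      proof -
        have "ms \<psi> 0 < 2 ^ N0 * \<epsilon> powr dg p" using N0 qe by (simp add: divide_less_eq)
        then show ?thesis by (simp add: divide_le_eq mult.commute)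
      qed
      finally have "ms \<psi> j \<le> \<epsilon> powr dg p" .
      then show ?thesis using small_from_ms[OF pt_ms] e unfolding j_def by auto
    qed
    then show ?thesis by blast
  qed
  have nz: "\<psi> 0 \<noteq> 0 \<or> \<psi> 1 \<noteq> 0"
  proof -
    have "t \<noteq> 0" using tK(1) by auto
    then have "fst t \<noteq> 0 \<or> snd t \<noteq> 0" by (cases t) (auto simp: zero_prod_def)
    then show ?thesis unfolding \<psi>_def Sf_data .
  qed
  show ?thesis using Sf_sol nz PD unfolding \<psi>_def by blast
qed

end

lemma szp_supp_le:
  fixes r :: "int \<Rightarrow> complex"
  assumes "finite S" "finite W" "\<And>n. n \<notin> W \<Longrightarrow> r n = 0"
  shows "szp p r S \<le> szp p r W"
  using szp_shift_le[OF assms, where k=0] by simp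

lemma bounded_tails:
  fixes f :: "int \<Rightarrow> complex"
  assumes "\<And>n. n \<ge> N1 \<Longrightarrow> norm (f n) \<le> B1" "\<And>n. n \<le> N2 \<Longrightarrow> norm (f n) \<le> B2"
  shows "\<exists>B. \<forall>n. norm (f n) \<le> B"
proof -
  define B where "B = max B1 (max B2 (Max (insert 0 ((\<lambda>n. norm (f n)) ` {N2..N1}))))"
  have "norm (f n) \<le> B" for n
  proof (cases "n \<ge> N1")
    case True then show ?thesis using assms(1)[of n] unfolding B_def by linarith
  next
    case False
    show ?thesis
    proof (cases "n \<le> N2")
      case True then show ?thesis using assms(2)[of n] unfolding B_def by linarith
    next
      case False
      then have "n \<in> {N2..N1}" using \<open>\<not> n \<ge> N1\<close> by auto
      then have "norm (f n) \<le> Max (insert 0 ((\<lambda>n. norm (f n)) ` {N2..N1}))" by (intro Max_ge) auto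
      then show ?thesis unfolding B_def by linarith
    qed
  qed
  then show ?thesis by blast
qed

context setting
begin

lemma lp_pt_bound:
  assumes "x \<in> lp_space p"
  shows "\<exists>B. \<forall>n. norm (x n) \<le> B"
proof -
  obtain K where K: "\<And>S. finite S \<Longrightarrow> szp p x S \<le> K" using assms lp_iff[OF p] by blast
  have "norm (x n) \<le> K powr (1 / dg p)" for n
  proof -
    have "norm (x n) \<le> szp p x {n} powr (1 / dg p)" by (rule szp_point'[OF _ _ p]) auto
    also have "\<dots> \<le> K powr (1 / dg p)" by (rule powr_mono2) (use K[of "{n}"] dpos in \<open>auto intro: szp_nonneg\<close>)
    finally show ?thesis .
  qed
  then show ?thesis by blast
qed

lemma maps_lp:
  assumes "x \<in> lp_space p"
  shows "Bop c x \<in> lp_space p"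
proof -
  obtain K where K: "\<And>S. finite S \<Longrightarrow> szp p x S \<le> K" using assms lp_iff[OF p] by blast
  have K0: "0 \<le> K" using K[of "{}"] by simp
  have sh: "szp p (\<lambda>n. x (n + k)) S \<le> K" if "finite S" for S k
  proof -
    have "szp p (\<lambda>n. x (n + k)) S = szp p x ((\<lambda>n. n + k) ` S)"
      by (rule szp_reindex) (auto simp: inj_on_def)
    also have "\<dots> \<le> K" using K that by simp
    finally show ?thesis .
  qed
  have "szp p (Bop c x) S \<le> 2 powr dg p * (K + 2 powr dg p * (K + M powr dg p * K))" if S: "finite S" for S
  proof -
    have cm: "szp p (\<lambda>n. c n * x n) S \<le> M powr dg p * K"
    proof -
      have "szp p (\<lambda>n. c n * x n) S \<le> szp p (\<lambda>n. complex_of_real M * x n) S"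
        by (rule szp_mono_fun[OF S p]) (use M M0 in \<open>auto simp: norm_mult intro: mult_right_mono\<close>)
      also have "\<dots> = M powr dg p * szp p x S" using szp_scale[OF S p] M0 by simp
      also have "\<dots> \<le> M powr dg p * K" using K S by (intro mult_left_mono) auto
      finally show ?thesis .
    qed
    have "Bop c x = (\<lambda>n. x (n + 1) + (x (n + (-1)) + c n * x n))" unfolding Bop_def by (auto simp: add.assoc)
    then have "szp p (Bop c x) S = szp p (\<lambda>n. x (n + 1) + (x (n + (-1)) + c n * x n)) S" by simp
    also have "\<dots> \<le> 2 powr dg p * (szp p (\<lambda>n. x (n + 1)) S + szp p (\<lambda>n. x (n + (-1)) + c n * x n) S)"
      by (rule szp_add[OF S p])
    also have "\<dots> \<le> 2 powr dg p * (K + 2 powr dg p * (K + M powr dg p * K))"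
    proof -
      have "szp p (\<lambda>n. x (n + (-1)) + c n * x n) S \<le> 2 powr dg p * (szp p (\<lambda>n. x (n + (-1))) S + szp p (\<lambda>n. c n * x n) S)"
        by (rule szp_add[OF S p])
      also have "\<dots> \<le> 2 powr dg p * (K + M powr dg p * K)"
        using sh[OF S, of "-1"] cm by (intro mult_left_mono add_mono) auto
      finally show ?thesis using sh[OF S, of 1] by (intro mult_left_mono add_mono) auto
    qed
    finally show ?thesis .
  qed
  then show ?thesis using lp_iff[OF p] by blast
qed

lemma inj_lp: "inj_on (Bop c) (lp_space p)"
proof (rule inj_onI)
  fix x y assume x: "x \<in> lp_space p" and y: "y \<in> lp_space p" and e: "Bop c x = Bop c y"
  obtain Bx where Bx: "\<And>n. norm (x n) \<le> Bx" using lp_pt_bound[OF x] by blast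
  obtain By where By: "\<And>n. norm (y n) \<le> By" using lp_pt_bound[OF y] by blast
  have "(\<lambda>n. x n - y n) n = 0" for n
  proof (rule bounded_zero)
    show "Bop c (\<lambda>n. x n - y n) n = 0" for n using e by (simp add: Bop_diff)
    show "norm (x n - y n) \<le> Bx + By" for n using Bx[of n] By[of n] norm_triangle_ineq4[of "x n" "y n"] by linarith
  qed
  then show "x = y" by auto
qed

end

lemma setting_reflect:
  assumes "setting p c C M L"
  shows "setting p (\<lambda>n. c (- n)) C M L"
  using assms LB_reflect unfolding setting_def by blast

context setting
begin

lemma psi_minus:
  "\<exists>\<psi>. (\<forall>n. Bop c \<psi> n = 0) \<and> (\<psi> 0 \<noteq> 0 \<or> \<psi> 1 \<noteq> 0) \<and> (\<forall>\<epsilon>>0. \<exists>N. \<forall>n\<le>N. norm (\<psi> n) \<le> \<epsilon>)"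
proof -
  interpret R: setting p "\<lambda>n. c (- n)" C M L by (rule setting_reflect) (rule setting_axioms)
  obtain \<psi>' where s: "\<And>n. Bop (\<lambda>n. c (- n)) \<psi>' n = 0" and nz: "\<psi>' 0 \<noteq> 0 \<or> \<psi>' 1 \<noteq> 0"
    and d: "\<And>\<epsilon>. \<epsilon> > 0 \<Longrightarrow> \<exists>N. \<forall>n\<ge>N. norm (\<psi>' n) \<le> \<epsilon>"
    using R.psi_exists by blast
  define \<psi> where "\<psi> n = \<psi>' (- n)" for n
  have sol: "Bop c \<psi> n = 0" for n
  proof -
    have e1: "- (n + 1) = - n - 1" and e2: "- (n - 1) = - n + 1" by simp_all
    have "Bop c \<psi> n = Bop (\<lambda>n. c (- n)) \<psi>' (- n)" unfolding Bop_def \<psi>_def e1 e2 by simp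
    then show ?thesis using s by simp
  qed
  have nz': "\<psi> 0 \<noteq> 0 \<or> \<psi> 1 \<noteq> 0"
  proof (rule ccontr)
    assume "\<not> ?thesis"
    then have z: "\<psi>' (-1) = 0" "\<psi>' (-1 + 1) = 0" unfolding \<psi>_def by auto
    have "\<psi>' n = 0" for n by (rule uniq[of _ \<psi>' "-1" n, OF s z])
    then show False using nz by simp
  qed
  have "\<exists>N. \<forall>n\<le>N. norm (\<psi> n) \<le> \<epsilon>" if e: "\<epsilon> > 0" for \<epsilon>
  proof -
    obtain N where N: "\<And>n. n \<ge> N \<Longrightarrow> norm (\<psi>' n) \<le> \<epsilon>" using d[OF e] by blast
    have "norm (\<psi> n) \<le> \<epsilon>" if "n \<le> - N" for n using N[of "- n"] that unfolding \<psi>_def by simp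
    then show ?thesis by blast
  qed
  then show ?thesis using sol nz' by blast
qed

end

context setting
begin

lemma indep:
  assumes sp: "\<And>n. Bop c \<psi>p n = 0" "\<psi>p 0 \<noteq> 0 \<or> \<psi>p 1 \<noteq> 0" "\<And>\<epsilon>. \<epsilon> > 0 \<Longrightarrow> \<exists>N. \<forall>n\<ge>N. norm (\<psi>p n) \<le> \<epsilon>"
    and sm: "\<And>n. Bop c \<psi>m n = 0" "\<psi>m 0 \<noteq> 0 \<or> \<psi>m 1 \<noteq> 0" "\<And>\<epsilon>. \<epsilon> > 0 \<Longrightarrow> \<exists>N. \<forall>n\<le>N. norm (\<psi>m n) \<le> \<epsilon>"
  shows "\<psi>m 0 * \<psi>p 1 - \<psi>m 1 * \<psi>p 0 \<noteq> 0"
proof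
  assume D: "\<psi>m 0 * \<psi>p 1 - \<psi>m 1 * \<psi>p 0 = 0"
  obtain s where s0: "\<psi>p 0 = s * \<psi>m 0" and s1: "\<psi>p 1 = s * \<psi>m 1"
  proof (cases "\<psi>m 0 = 0")
    case True
    then have "\<psi>m 1 \<noteq> 0" using sm(2) by simp
    moreover have "\<psi>p 0 = 0" using D True \<open>\<psi>m 1 \<noteq> 0\<close> by simp
    ultimately show ?thesis using that[of "\<psi>p 1 / \<psi>m 1"] True by simp
  next
    case False
    have "\<psi>p 1 = \<psi>p 0 / \<psi>m 0 * \<psi>m 1" using D False by (simp add: field_simps)
    then show ?thesis using that[of "\<psi>p 0 / \<psi>m 0"] False by simp
  qed
  have eq: "\<psi>p = (\<lambda>n. s * \<psi>m n)"
    by (rule uniq2[of c _ _ 0]) (use sp(1) sm(1) s0 s1 in \<open>simp_all add: Bop_scale\<close>)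
  obtain N1 where N1: "\<And>n. n \<ge> N1 \<Longrightarrow> norm (\<psi>p n) \<le> 1" using sp(3)[of 1] by auto
  obtain N2 where N2: "\<And>n. n \<le> N2 \<Longrightarrow> norm (\<psi>m n) \<le> 1" using sm(3)[of 1] by auto
  have "\<And>n. n \<le> N2 \<Longrightarrow> norm (\<psi>p n) \<le> norm s"
    using N2 unfolding eq by (simp add: norm_mult mult_left_le)
  then obtain B where B: "\<And>n. norm (\<psi>p n) \<le> B" using bounded_tails[of N1 \<psi>p 1 N2 "norm s"] N1 by blast
  have "\<psi>p n = 0" for n by (rule bounded_zero[OF sp(1) B])
  then show False using sp(2) by simp
qed

lemma card4: "card {a1, a2, a3, a4 :: 'a} \<le> 4"
  using card_length[of "[a1, a2, a3, a4]"] by simp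

lemma approx:
  assumes Y: "\<And>S. finite S \<Longrightarrow> szp p y S \<le> Y"
    and sp: "\<And>n. Bop c \<psi>p n = 0" "\<And>\<epsilon>. \<epsilon> > 0 \<Longrightarrow> \<exists>N. \<forall>n\<ge>N. norm (\<psi>p n) \<le> \<epsilon>"
    and sm: "\<And>n. Bop c \<psi>m n = 0" "\<And>\<epsilon>. \<epsilon> > 0 \<Longrightarrow> \<exists>N. \<forall>n\<le>N. norm (\<psi>m n) \<le> \<epsilon>"
    and D: "\<psi>m 0 * \<psi>p 1 - \<psi>m 1 * \<psi>p 0 \<noteq> 0"
  shows "\<exists>xk. (\<forall>n. \<bar>n\<bar> \<le> int k \<longrightarrow> Bop c xk n = y n) \<and>
              (\<forall>S. finite S \<longrightarrow> szp p xk S \<le> C * (2 powr dg p * (Y + 1)))"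
proof -
  define yk where "yk n = (if \<bar>n\<bar> \<le> int k then y n else 0)" for n
  obtain z0 where z0: "\<And>n. Bop c z0 n = yk n" "z0 (- int k - 1) = 0" "z0 (- int k - 1 + 1) = 0"
    using sol_exists[of c yk "- int k - 1" 0 0] by auto
  have z0L: "z0 n = 0" if "n \<le> - int k" for n
    by (rule uniq_left[of "- int k - 1" c z0 n]) (use z0 that in \<open>auto simp: yk_def\<close>)
  obtain \<sigma> where \<sigma>: "\<And>n. Bop c \<sigma> n = 0" "\<sigma> (int k + 1) = z0 (int k + 1)" "\<sigma> (int k + 1 + 1) = z0 (int k + 1 + 1)"
    using sol_exists[of c "\<lambda>_. 0" "int k + 1" "z0 (int k + 1)" "z0 (int k + 1 + 1)"] by auto
  have z0R: "z0 n = \<sigma> n" if "n \<ge> int k + 1" for n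
  proof -
    have "(\<lambda>n. z0 n - \<sigma> n) n = 0"
      by (rule uniq_right[of "int k + 1" c _ n]) (use z0 \<sigma> that in \<open>auto simp: Bop_diff yk_def\<close>)
    then show ?thesis by simp
  qed
  define Dt where "Dt = \<psi>m 0 * \<psi>p 1 - \<psi>m 1 * \<psi>p 0"
  define \<alpha> where "\<alpha> = (\<sigma> 0 * \<psi>p 1 - \<sigma> 1 * \<psi>p 0) / Dt"
  define \<beta> where "\<beta> = (\<psi>m 0 * \<sigma> 1 - \<psi>m 1 * \<sigma> 0) / Dt"
  have Dt: "Dt \<noteq> 0" using D unfolding Dt_def .
  have \<sigma>dec: "\<sigma> = (\<lambda>n. \<alpha> * \<psi>m n + \<beta> * \<psi>p n)"
  proof (rule uniq2[of c _ _ 0])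
    show "\<And>n. Bop c \<sigma> n = Bop c (\<lambda>n. \<alpha> * \<psi>m n + \<beta> * \<psi>p n) n"
      using \<sigma>(1) sp(1) sm(1) by (simp add: Bop_add Bop_scale)
    have n0: "(\<sigma> 0 * \<psi>p 1 - \<sigma> 1 * \<psi>p 0) * \<psi>m 0 + (\<psi>m 0 * \<sigma> 1 - \<psi>m 1 * \<sigma> 0) * \<psi>p 0 = \<sigma> 0 * Dt"
      unfolding Dt_def by algebra
    have n1: "(\<sigma> 0 * \<psi>p 1 - \<sigma> 1 * \<psi>p 0) * \<psi>m 1 + (\<psi>m 0 * \<sigma> 1 - \<psi>m 1 * \<sigma> 0) * \<psi>p 1 = \<sigma> 1 * Dt"
      unfolding Dt_def by algebra
    have "\<alpha> * \<psi>m 0 + \<beta> * \<psi>p 0 = ((\<sigma> 0 * \<psi>p 1 - \<sigma> 1 * \<psi>p 0) * \<psi>m 0 + (\<psi>m 0 * \<sigma> 1 - \<psi>m 1 * \<sigma> 0) * \<psi>p 0) / Dt"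
      unfolding \<alpha>_def \<beta>_def by (simp add: add_divide_distrib)
    then show "\<sigma> 0 = \<alpha> * \<psi>m 0 + \<beta> * \<psi>p 0" using n0 Dt by simp
    have "\<alpha> * \<psi>m 1 + \<beta> * \<psi>p 1 = ((\<sigma> 0 * \<psi>p 1 - \<sigma> 1 * \<psi>p 0) * \<psi>m 1 + (\<psi>m 0 * \<sigma> 1 - \<psi>m 1 * \<sigma> 0) * \<psi>p 1) / Dt"
      unfolding \<alpha>_def \<beta>_def by (simp add: add_divide_distrib)
    then show "\<sigma> (0 + 1) = \<alpha> * \<psi>m (0 + 1) + \<beta> * \<psi>p (0 + 1)" using n1 Dt by simp
  qed
  define x where "x n = z0 n - \<alpha> * \<psi>m n" for n
  have xsol: "Bop c x n = yk n" for n unfolding x_def Bop_diff Bop_scale z0 sm(1) by simp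
  have xL: "x n = - \<alpha> * \<psi>m n" if "n \<le> - int k" for n unfolding x_def using z0L[OF that] by simp
  have xR: "x n = \<beta> * \<psi>p n" if "n \<ge> int k + 1" for n unfolding x_def using z0R[OF that] \<sigma>dec by simp
  define \<delta> :: real where "\<delta> = 1 / 4"
  obtain N1 where N1: "\<And>n. n \<ge> N1 \<Longrightarrow> norm (\<psi>p n) \<le> \<delta> / (norm \<beta> + 1)"
    using sp(2)[of "\<delta> / (norm \<beta> + 1)"] unfolding \<delta>_def
    by (metis divide_pos_pos norm_ge_zero add_nonneg_pos zero_less_one zero_less_divide_iff zero_less_numeral)
  obtain N2 where N2: "\<And>n. n \<le> N2 \<Longrightarrow> norm (\<psi>m n) \<le> \<delta> / (norm \<alpha> + 1)"
    using sm(2)[of "\<delta> / (norm \<alpha> + 1)"] unfolding \<delta>_def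
    by (metis divide_pos_pos norm_ge_zero add_nonneg_pos zero_less_one zero_less_divide_iff zero_less_numeral)
  have aux: "norm (a :: complex) * (\<delta> / (norm a + 1)) \<le> \<delta>" for a
  proof -
    have "norm a * (\<delta> / (norm a + 1)) = \<delta> * (norm a / (norm a + 1))" by simp
    also have "\<dots> \<le> \<delta> * 1"
    proof (rule mult_left_mono)
      have "0 < norm a + 1" using norm_ge_zero[of a] by linarith
      then show "norm a / (norm a + 1) \<le> 1" by (simp add: divide_le_eq)
    qed (auto simp: \<delta>_def)
    finally show ?thesis by simp
  qed
  define K where "K = max (int k + 2) (max N1 (- N2)) + 1"
  have smallR: "norm (x n) \<le> \<delta>" if "n \<ge> K - 1" for n
  proof -
    have "n \<ge> int k + 1" "n \<ge> N1" using that unfolding K_def by auto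
    then have "norm (x n) = norm \<beta> * norm (\<psi>p n)" using xR by (simp add: norm_mult)
    also have "\<dots> \<le> norm \<beta> * (\<delta> / (norm \<beta> + 1))" using N1 \<open>n \<ge> N1\<close> by (intro mult_left_mono) auto
    also have "\<dots> \<le> \<delta>" by (rule aux)
    finally show ?thesis .
  qed
  have smallL: "norm (x n) \<le> \<delta>" if "n \<le> - (K - 1)" for n
  proof -
    have "n \<le> - int k" "n \<le> N2" using that unfolding K_def by auto
    then have "norm (x n) = norm \<alpha> * norm (\<psi>m n)" using xL by (simp add: norm_mult)
    also have "\<dots> \<le> norm \<alpha> * (\<delta> / (norm \<alpha> + 1))" using N2 \<open>n \<le> N2\<close> by (intro mult_left_mono) auto
    also have "\<dots> \<le> \<delta>" by (rule aux)
    finally show ?thesis .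
  qed
  have Kk: "int k + 2 \<le> K - 1" unfolding K_def by auto
  define xk where "xk n = (if \<bar>n\<bar> \<le> K then x n else 0)" for n
  define r where "r n = Bop c xk n - yk n" for n
  define W where "W = {- K - 1, - K, K, K + 1}"
  have r0: "r n = 0" if "n \<notin> W" for n
  proof (cases "\<bar>n\<bar> \<le> K - 1")
    case True
    then have "xk (n + 1) = x (n + 1)" "xk (n - 1) = x (n - 1)" "xk n = x n" unfolding xk_def by auto
    then have "Bop c xk n = Bop c x n" unfolding Bop_def by simp
    then show ?thesis unfolding r_def xsol by simp
  next
    case False
    then have "\<bar>n\<bar> \<ge> K + 2" using that unfolding W_def by auto
    then have "xk (n + 1) = 0" "xk (n - 1) = 0" "xk n = 0" "yk n = 0"
      unfolding xk_def yk_def using Kk by auto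
    then show ?thesis unfolding r_def Bop_def by simp
  qed
  have yk0: "yk n = 0" if "\<bar>n\<bar> \<ge> K" for n unfolding yk_def using that Kk by auto
  have rb: "norm (r n) \<le> \<delta>" for n
  proof (cases "n \<in> W")
    case False then show ?thesis using r0 by (simp add: \<delta>_def)
  next
    case True
    then consider "n = - K - 1" | "n = - K" | "n = K" | "n = K + 1" unfolding W_def by auto
    then show ?thesis
    proof cases
      case 1
      have "r n = x (- K)" unfolding r_def 1 Bop_def xk_def using yk0[of "- K - 1"] Kk by auto
      then show ?thesis using smallL[of "- K"] by simp
    next
      case 2
      have "Bop c x (- K) = 0" using xsol yk0[of "- K"] Kk by simp
      then have "x (- K + 1) + c (- K) * x (- K) = - x (- K - 1)" unfolding Bop_def by algebra
      moreover have "r n = x (- K + 1) + c (- K) * x (- K)"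
        unfolding r_def 2 Bop_def xk_def using yk0[of "- K"] Kk by auto
      ultimately show ?thesis using smallL[of "- K - 1"] by simp
    next
      case 3
      have "Bop c x K = 0" using xsol yk0[of K] Kk by simp
      then have "x (K - 1) + c K * x K = - x (K + 1)" unfolding Bop_def by algebra
      moreover have "r n = x (K - 1) + c K * x K"
        unfolding r_def 3 Bop_def xk_def using yk0[of K] Kk by auto
      ultimately show ?thesis using smallR[of "K + 1"] by simp
    next
      case 4
      have "r n = x K" unfolding r_def 4 Bop_def xk_def using yk0[of "K + 1"] Kk by auto
      then show ?thesis using smallR[of K] by simp
    qed
  qed
  have suppk: "\<forall>n. n < - K \<or> K < n \<longrightarrow> xk n = 0" unfolding xk_def by auto
  have lbk: "szp p xk {- K..K} \<le> C * szp p (Bop c xk) {- K - 1..K + 1}"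
    using lb suppk unfolding LB_def by blast
  have Bk: "Bop c xk = (\<lambda>n. yk n + r n)" unfolding r_def by auto
  have finW: "finite W" unfolding W_def by simp
  have szr: "szp p r S \<le> 1" if "finite S" for S
  proof -
    have "szp p r S \<le> szp p r W" by (rule szp_supp_le[OF that finW]) (use r0 in auto)
    also have "\<dots> \<le> real (card W) * \<delta> powr dg p"
      by (rule szp_le_card[OF finW p]) (use rb in \<open>auto simp: \<delta>_def\<close>)
    also have "\<dots> \<le> 4 * \<delta>"
    proof (rule mult_mono)
      show "real (card W) \<le> 4" using card4[of "- K - 1" "- K" K "K + 1"] unfolding W_def by simp
      show "\<delta> powr dg p \<le> \<delta>" by (rule powr_le_self) (use dg_ge1[OF p] in \<open>auto simp: \<delta>_def\<close>)
    qed (auto simp: \<delta>_def)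
    finally show ?thesis by (simp add: \<delta>_def)
  qed
  have szy: "szp p yk S \<le> Y" if "finite S" for S
  proof -
    have "szp p yk S \<le> szp p y S" by (rule szp_mono_fun[OF that p]) (auto simp: yk_def)
    also have "\<dots> \<le> Y" using Y[OF that] .
    finally show ?thesis .
  qed
  have "szp p (Bop c xk) {- K - 1..K + 1} \<le> 2 powr dg p * (Y + 1)"
  proof -
    have "szp p (Bop c xk) {- K - 1..K + 1} \<le> 2 powr dg p * (szp p yk {- K - 1..K + 1} + szp p r {- K - 1..K + 1})"
      unfolding Bk by (rule szp_add) (simp_all add: p)
    also have "\<dots> \<le> 2 powr dg p * (Y + 1)"
      using szy[of "{- K - 1..K + 1}"] szr[of "{- K - 1..K + 1}"] by (intro mult_left_mono add_mono) auto
    finally show ?thesis .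
  qed
  then have main: "szp p xk {- K..K} \<le> C * (2 powr dg p * (Y + 1))"
    using lbk C by (meson mult_left_mono order_trans)
  have P2: "szp p xk S \<le> C * (2 powr dg p * (Y + 1))" if "finite S" for S
  proof -
    have "szp p xk S \<le> szp p xk {- K..K}" by (rule szp_supp_le[OF that]) (auto simp: xk_def)
    then show ?thesis using main by linarith
  qed
  have P1: "Bop c xk n = y n" if "\<bar>n\<bar> \<le> int k" for n
  proof -
    have "n \<notin> W" using that Kk unfolding W_def by auto
    then have "r n = 0" by (rule r0)
    then show ?thesis using that unfolding r_def yk_def by simp
  qed
  show ?thesis using P1 P2 by blast
qed

end

context setting
begin

lemma surj_lp:
  assumes y: "y \<in> lp_space p"
  shows "\<exists>x\<in>lp_space p. Bop c x = y"
proof -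
  obtain Y where Y: "\<And>S. finite S \<Longrightarrow> szp p y S \<le> Y" using y lp_iff[OF p] by blast
  obtain \<psi>p where sp: "\<And>n. Bop c \<psi>p n = 0" "\<psi>p 0 \<noteq> 0 \<or> \<psi>p 1 \<noteq> 0" "\<And>\<epsilon>. \<epsilon> > 0 \<Longrightarrow> \<exists>N. \<forall>n\<ge>N. norm (\<psi>p n) \<le> \<epsilon>"
    using psi_exists by blast
  obtain \<psi>m where sm: "\<And>n. Bop c \<psi>m n = 0" "\<psi>m 0 \<noteq> 0 \<or> \<psi>m 1 \<noteq> 0" "\<And>\<epsilon>. \<epsilon> > 0 \<Longrightarrow> \<exists>N. \<forall>n\<le>N. norm (\<psi>m n) \<le> \<epsilon>"
    using psi_minus by blast
  have D: "\<psi>m 0 * \<psi>p 1 - \<psi>m 1 * \<psi>p 0 \<noteq> 0" by (rule indep[OF sp sm])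
  define X0 where "X0 = C * (2 powr dg p * (Y + 1))"
  have "\<forall>k. \<exists>xk. (\<forall>n. \<bar>n\<bar> \<le> int k \<longrightarrow> Bop c xk n = y n) \<and> (\<forall>S. finite S \<longrightarrow> szp p xk S \<le> X0)"
    unfolding X0_def using approx[OF Y sp(1,3) sm(1,3) D] by blast
  then obtain X where X1: "\<And>k n. \<bar>n\<bar> \<le> int k \<Longrightarrow> Bop c (X k) n = y n"
    and X2: "\<And>k S. finite S \<Longrightarrow> szp p (X k) S \<le> X0"
    by metis
  define X1 where "X1 = 2 powr dg p * (X0 + X0)"
  have hb: "szp p (\<lambda>m. X l m - X k m) S \<le> X1" if "finite S" for l k S
  proof -
    have "szp p (\<lambda>m. X l m + (- X k m)) S \<le> 2 powr dg p * (szp p (X l) S + szp p (\<lambda>m. - X k m) S)"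
      by (rule szp_add[OF that p])
    also have "szp p (\<lambda>m. - X k m) S = szp p (X k) S" by (rule szp_norm_eq) simp
    also have "2 powr dg p * (szp p (X l) S + szp p (X k) S) \<le> 2 powr dg p * (X0 + X0)"
      by (rule mult_left_mono) (use X2[OF that, of l] X2[OF that, of k] in auto)
    finally show ?thesis unfolding X1_def by simp
  qed
  have close: "norm (X l n - X k n) \<le> \<epsilon>"
    if e: "\<epsilon> > 0" and kl: "k \<le> l" and k0: "int k \<ge> (\<bar>n div L\<bar> + int D + 2) * L"
      and D: "X1 / \<epsilon> powr dg p < 2 ^ D" for \<epsilon> k l n D
  proof -
    define h where "h m = X l m - X k m" for m
    define j0 where "j0 = n div L"
    have hsol: "Bop c h m = 0" if "\<bar>m\<bar> \<le> int k" for m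
      unfolding h_def Bop_diff using X1[OF that] X1[of m l] that kl by simp
    have hms: "ms h j \<le> X1" for j unfolding ms_def h_def by (rule hb) simp
    have sh: "SHat (ms h) i" if "j0 - int D \<le> i" "i \<le> j0 + int D" for i
    proof (rule SH_local)
      fix m assume m: "m \<in> {(i - 1) * L ..< (i + 2) * L}"
      have "- (\<bar>j0\<bar> + int D + 2) \<le> i - 1" using that by linarith
      then have "- (\<bar>j0\<bar> + int D + 2) * L \<le> (i - 1) * L" by (rule mult_right_mono) (use Lpos in simp)
      then have a: "- ((\<bar>j0\<bar> + int D + 2) * L) \<le> (i - 1) * L" by (simp only: mult_minus_left)
      have b: "(i + 2) * L \<le> (\<bar>j0\<bar> + int D + 2) * L"
        by (rule mult_right_mono) (use that Lpos in auto)
      have "m \<le> int k" "- int k \<le> m" using m a b k0 unfolding j0_def by auto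
      then have "\<bar>m\<bar> \<le> int k" by (simp add: abs_le_iff)
      then show "Bop c h m = 0" by (rule hsol)
    qed
    have "2 ^ nat (min (j0 - (j0 - int D)) (j0 + int D - j0)) * ms h j0 \<le> X1"
      by (rule local_small) (use sh ms_nonneg hms in auto)
    then have "2 ^ D * ms h j0 \<le> X1" by simp
    moreover have "X1 < 2 ^ D * \<epsilon> powr dg p" using D e by (simp add: divide_less_eq)
    ultimately have "2 ^ D * ms h j0 \<le> 2 ^ D * \<epsilon> powr dg p" by linarith
    then have hm: "ms h (n div L) \<le> \<epsilon> powr dg p" unfolding j0_def by simp
    have "norm (h n) \<le> \<epsilon>" by (rule small_from_ms[OF pt_ms[of h n] hm]) (use e in simp)
    then show ?thesis unfolding h_def .
  qed
  have cau: "Cauchy (\<lambda>k. X k n)" for n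
  proof (rule CauchyI)
    fix e :: real assume e: "0 < e"
    have e2: "0 < e / 2" using e by simp
    have X1pos: "0 \<le> X1" using hb[of "{}" 0 0] by simp
    have "\<exists>D::nat. X1 / (e / 2) powr dg p < 2 ^ D" by (rule real_arch_pow) simp
    then obtain D :: nat where D: "X1 / (e / 2) powr dg p < 2 ^ D" by blast
    define M where "M = nat ((\<bar>n div L\<bar> + int D + 2) * L)"
    have "norm (X a n - X b n) < e" if "a \<ge> M" "b \<ge> M" for a b
    proof (cases "b \<le> a")
      case True
      have "norm (X a n - X b n) \<le> e / 2"
        by (rule close[OF e2 True _ D]) (use that(2) in \<open>auto simp: M_def\<close>)
      then show ?thesis using e by linarith
    next
      case False
      have "norm (X b n - X a n) \<le> e / 2"
        by (rule close[OF e2 _ _ D]) (use that(1) False in \<open>auto simp: M_def\<close>)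
      then show ?thesis using e by (simp add: norm_minus_commute)
    qed
    then show "\<exists>M. \<forall>m\<ge>M. \<forall>n'\<ge>M. norm (X m n - X n' n) < e" by blast
  qed
  define x where "x n = lim (\<lambda>k. X k n)" for n
  have lim: "(\<lambda>k. X k n) \<longlonglongrightarrow> x n" for n
    unfolding x_def using cau[of n] Cauchy_convergent_iff convergent_LIMSEQ_iff by blast
  have "Bop c x n = y n" for n
  proof -
    have t: "(\<lambda>k. Bop c (X k) n) \<longlonglongrightarrow> Bop c x n"
      unfolding Bop_def by (intro tendsto_intros lim)
    have "eventually (\<lambda>k. Bop c (X k) n = y n) sequentially"
      unfolding eventually_sequentially
      by (rule exI[of _ "nat \<bar>n\<bar>"]) (auto intro: X1)
    then have "(\<lambda>k. Bop c (X k) n) \<longlonglongrightarrow> y n" by (rule tendsto_eventually)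
    then show ?thesis using t LIMSEQ_unique by blast
  qed
  moreover have "x \<in> lp_space p"
  proof -
    have "szp p x S \<le> X0" if S: "finite S" for S
    proof -
      have "(\<lambda>k. szp p (X k) S) \<longlonglongrightarrow> szp p x S"
        by (rule szp_tendsto[OF S p]) (rule lim)
      moreover have "\<forall>\<^sub>F k in sequentially. szp p (X k) S \<le> X0" using X2[OF S] by simp
      ultimately show ?thesis by (rule tendsto_upperbound) (rule sequentially_bot)
    qed
    then show ?thesis using lp_iff[OF p] by blast
  qed
  ultimately show ?thesis by auto
qed

theorem bij_lp: "bij_betw (Bop c) (lp_space p) (lp_space p)"
  unfolding bij_betw_def
proof
  show "inj_on (Bop c) (lp_space p)" by (rule inj_lp)
  show "Bop c ` lp_space p = lp_space p"
    using maps_lp surj_lp by (auto simp: image_iff)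
qed

end

definition Aop :: "(int \<Rightarrow> complex) \<Rightarrow> (nat \<Rightarrow> complex) \<Rightarrow> nat \<Rightarrow> complex" where
  "Aop c x n = x (n + 1) + (if n = 0 then 0 else x (n - 1)) + c (int n) * x n"

lemma Aop_diff: "Aop c (\<lambda>n. x n - y n) n = Aop c x n - Aop c y n"
  unfolding Aop_def by (simp add: algebra_simps)

lemma Aop_scale: "Aop c (\<lambda>n. t * x n) n = t * Aop c x n"
  unfolding Aop_def by (simp add: algebra_simps)

lemma Aop_zero: "Aop c (\<lambda>n. 0) n = 0"
  unfolding Aop_def by simp

primrec uF :: "(int \<Rightarrow> complex) \<Rightarrow> nat \<Rightarrow> complex \<times> complex" where
  "uF c 0 = (1, - c 0)"
| "uF c (Suc k) = (snd (uF c k), - fst (uF c k) - c (int k + 1) * snd (uF c k))"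

definition uu :: "(int \<Rightarrow> complex) \<Rightarrow> nat \<Rightarrow> complex" where
  "uu c n = fst (uF c n)"

lemma uu_Suc: "uu c (Suc n) = snd (uF c n)"
  unfolding uu_def by simp

lemma uu_sol: "Aop c (uu c) n = 0"
proof (cases n)
  case 0 then show ?thesis unfolding Aop_def uu_def by simp
next
  case (Suc m)
  have "uu c (Suc m + 1) = - uu c m - c (int m + 1) * uu c (Suc m)"
    unfolding uu_def by simp
  then show ?thesis unfolding Aop_def Suc by (simp add: uu_Suc uu_def add.commute)
qed

lemma uu0: "uu c 0 = 1" unfolding uu_def by simp

lemma kernel_uniq:
  assumes "\<And>n. Aop c y n = 0" "y 0 = 0"
  shows "y n = 0"
proof -
  have "y k = 0 \<and> y (Suc k) = 0" for k
  proof (induction k)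
    case 0
    have "Aop c y 0 = 0" by (rule assms(1))
    then show ?case using assms(2) unfolding Aop_def by simp
  next
    case (Suc k)
    have "Aop c y (Suc k) = 0" by (rule assms(1))
    then have "y (Suc (Suc k)) = 0" using Suc unfolding Aop_def by simp
    then show ?case using Suc by simp
  qed
  then show ?thesis by blast
qed

lemma kernel:
  assumes "\<And>n. Aop c y n = 0"
  shows "y = (\<lambda>n. y 0 * uu c n)"
proof
  fix n
  have "(\<lambda>n. y n - y 0 * uu c n) n = 0"
    by (rule kernel_uniq[of c]) (use assms in \<open>simp_all add: Aop_diff Aop_scale uu_sol uu0\<close>)
  then show "y n = y 0 * uu c n" by simp
qed

lemma szp_supp_le2:
  assumes "finite S" "finite W" "\<And>n. n \<in> S \<Longrightarrow> n \<notin> W \<Longrightarrow> r n = 0"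
  shows "szp p r S \<le> szp p r W"
proof -
  have "szp p r S \<le> szp p r ((S - W) \<union> W)" by (rule szp_mono_set) (use assms in auto)
  also have "\<dots> \<le> szp p r (S - W) + szp p r W" by (rule szp_union) (use assms in auto)
  also have "szp p r (S - W) = 0" by (rule szp_zero) (use assms in auto)
  finally show ?thesis by simp
qed

lemma szp_UN:
  fixes K :: nat
  assumes "\<And>k. finite (E k)"
  shows "szp p r (\<Union>k<K. E k) \<le> (\<Sum>k<K. szp p r (E k))"
proof (induction K)
  case 0 then show ?case by simp
next
  case (Suc K)
  have "(\<Union>k<Suc K. E k) = (\<Union>k<K. E k) \<union> E K" by (auto simp: lessThan_Suc)
  then have "szp p r (\<Union>k<Suc K. E k) \<le> szp p r (\<Union>k<K. E k) + szp p r (E K)"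
    using szp_union[of "\<Union>k<K. E k" "E K" p r] assms by simp
  then show ?case using Suc by simp
qed

lemma geom_half: "(\<Sum>k<K. (1 / 2 :: real) ^ k) \<le> 2"
proof -
  have "(\<Sum>k<K. (1 / 2 :: real) ^ k) = 2 - 2 * (1 / 2) ^ K"
    by (induction K) (auto simp: field_simps)
  then show ?thesis by simp
qed

lemma sum_single:
  assumes "finite A" "\<And>k'. k' \<in> A \<Longrightarrow> k' \<noteq> k \<Longrightarrow> f k' = (0::complex)"
  shows "sum f A = (if k \<in> A then f k else 0)"
proof (cases "k \<in> A")
  case True
  then have "sum f A = f k + sum f (A - {k})" using assms(1) by (simp add: sum.remove)
  also have "sum f (A - {k}) = 0" by (rule sum.neutral) (use assms in auto)
  finally show ?thesis using True by simp
next
  case False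
  then show ?thesis using assms by (auto intro: sum.neutral)
qed

definition goodset :: "ereal \<Rightarrow> (int \<Rightarrow> complex) \<Rightarrow> nat \<Rightarrow> nat \<Rightarrow> ((nat \<Rightarrow> complex) \<times> nat \<times> nat) set" where
  "goodset p c R k = {(x, a, b). R \<le> a \<and> (\<forall>n. n < a \<or> b < n \<longrightarrow> x n = 0) \<and>
      szp p x {a..b} = 2 ^ k \<and> szp p (Aop c x) {a - 1..b + 1} \<le> (1 / 2) ^ k}"

primrec gseq :: "ereal \<Rightarrow> (int \<Rightarrow> complex) \<Rightarrow> nat \<Rightarrow> (nat \<Rightarrow> complex) \<times> nat \<times> nat" where
  "gseq p c 0 = (SOME t. t \<in> goodset p c 1 0)"
| "gseq p c (Suc k) = (SOME t. t \<in> goodset p c (snd (snd (gseq p c k)) + 3) (Suc k))"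

lemma lp_zero:
  assumes "1 \<le> p" shows "(\<lambda>n::'i. 0::complex) \<in> lp_space p"
proof -
  have "szp p (\<lambda>n::'i. 0::complex) S \<le> 0" for S :: "'i set" by (simp add: szp_zero)
  then show ?thesis using lp_iff[OF assms] by blast
qed

lemma gliding:
  fixes c :: "int \<Rightarrow> complex"
  assumes p: "1 \<le> p" and bij: "bij_betw (Aop c) (lp_space p) (lp_space p)"
  shows "\<exists>R C. 1 \<le> R \<and> 0 \<le> C \<and> (\<forall>x a b. R \<le> a \<longrightarrow> (\<forall>n. n < a \<or> b < n \<longrightarrow> x n = 0) \<longrightarrow>
           szp p x {a..b} \<le> C * szp p (Aop c x) {a - 1..b + 1})"
proof (rule ccontr)
  assume neg: "\<not> ?thesis"
  have bad: "\<exists>x a b. R \<le> a \<and> (\<forall>n. n < a \<or> b < n \<longrightarrow> x n = 0) \<and> C * szp p (Aop c x) {a - 1..b + 1} < szp p x {a..b}"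
    if "1 \<le> R" "0 \<le> C" for R C
    using neg that by (meson not_le)
  have goodne: "goodset p c R k \<noteq> {}" if R: "1 \<le> R" for R k
  proof -
    obtain x a b where x: "R \<le> a" "\<forall>n. n < a \<or> b < n \<longrightarrow> x n = 0"
      and lt: "4 ^ k * szp p (Aop c x) {a - 1..b + 1} < szp p x {a..b}"
      using bad[OF R, of "4 ^ k"] by auto
    define sX where "sX = szp p x {a..b}"
    define sA where "sA = szp p (Aop c x) {a - 1..b + 1}"
    have sA0: "0 \<le> sA" unfolding sA_def by (rule szp_nonneg) simp
    have sXpos: "0 < sX" using lt sA0 unfolding sX_def sA_def
      by (smt (verit) mult_nonneg_nonneg zero_le_power)
    define t where "t = (2 ^ k / sX) powr (1 / dg p)"
    have tpos: "0 < t" unfolding t_def using sXpos by simp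
    have td: "t powr dg p = 2 ^ k / sX"
    proof -
      have "t powr dg p = (2 ^ k / sX) powr (1 / dg p * dg p)" unfolding t_def by (simp add: powr_powr)
      also have "1 / dg p * dg p = 1" using dg_pos[OF p] by simp
      finally show ?thesis using sXpos by simp
    qed
    define x' where "x' n = complex_of_real t * x n" for n
    have "szp p x' {a..b} = t powr dg p * sX"
      unfolding x'_def sX_def using szp_scale[OF _ p, of "{a..b}" "complex_of_real t" x] tpos by simp
    also have "\<dots> = 2 ^ k" using td sXpos by simp
    finally have e1: "szp p x' {a..b} = 2 ^ k" .
    have "szp p (Aop c x') {a - 1..b + 1} = t powr dg p * sA"
    proof -
      have "Aop c x' = (\<lambda>n. complex_of_real t * Aop c x n)" unfolding x'_def by (auto simp: Aop_scale)
      then show ?thesis unfolding sA_def using szp_scale[OF _ p, of "{a - 1..b + 1}" "complex_of_real t" "Aop c x"] tpos by simp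
    qed
    also have "\<dots> = 2 ^ k * sA / sX" using td by simp
    also have "\<dots> \<le> (1 / 2) ^ k"
    proof -
      have "4 ^ k * sA < sX" using lt unfolding sA_def sX_def .
      then have "2 ^ k * (2 ^ k * sA) \<le> sX" by (simp add: power_mult_distrib[symmetric] mult.assoc[symmetric])
      then have "2 ^ k * sA \<le> sX / 2 ^ k" by (simp add: field_simps)
      then show ?thesis using sXpos by (simp add: divide_le_eq power_one_over field_simps)
    qed
    finally have e2: "szp p (Aop c x') {a - 1..b + 1} \<le> (1 / 2) ^ k" .
    have "\<forall>n. n < a \<or> b < n \<longrightarrow> x' n = 0" using x(2) unfolding x'_def by simp
    then have "(x', a, b) \<in> goodset p c R k" unfolding goodset_def using x(1) e1 e2 by simp
    then show ?thesis by blast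
  qed
  define xs where "xs k = fst (gseq p c k)" for k
  define as where "as k = fst (snd (gseq p c k))" for k
  define bs where "bs k = snd (snd (gseq p c k))" for k
  have gk: "gseq p c k \<in> goodset p c (if k = 0 then 1 else bs (k - 1) + 3) k" for k
  proof (cases k)
    case 0 then show ?thesis using goodne[of 1 0] by (simp add: some_in_eq)
  next
    case (Suc j) then show ?thesis using goodne[of "bs j + 3" "Suc j"] unfolding bs_def by (simp add: some_in_eq)
  qed
  have G: "(if k = 0 then 1 else bs (k - 1) + 3) \<le> as k" "\<forall>n. n < as k \<or> bs k < n \<longrightarrow> xs k n = 0"
    "szp p (xs k) {as k..bs k} = 2 ^ k" "szp p (Aop c (xs k)) {as k - 1..bs k + 1} \<le> (1 / 2) ^ k" for k
    using gk[of k] unfolding goodset_def xs_def as_def bs_def by (auto simp: case_prod_beta)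
  have ab: "as k \<le> bs k" for k
  proof (rule ccontr)
    assume "\<not> as k \<le> bs k"
    then have "{as k..bs k} = {}" by simp
    then show False using G(3)[of k] by simp
  qed
  have as0: "1 \<le> as k" for k using G(1)[of k] by (cases k) auto
  have asS: "bs k + 3 \<le> as (Suc k)" for k using G(1)[of "Suc k"] by simp
  have sep: "bs k + 3 \<le> as k'" if "k < k'" for k k'
    using that
  proof (induction k')
    case 0 then show ?case by simp
  next
    case (Suc j)
    show ?case
    proof (cases "k = j")
      case True then show ?thesis using asS by simp
    next
      case False
      then have "bs k + 3 \<le> as j" using Suc by simp
      then show ?thesis using ab[of j] asS[of j] by linarith
    qed
  qed
  have ask: "k + 1 \<le> as k" for k
  proof (induction k)
    case 0 then show ?case using as0 by simp
  next
    case (Suc k) then show ?case using ab[of k] asS[of k] by linarith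
  qed
  define inb where "inb k n \<longleftrightarrow> as k \<le> n \<and> n \<le> bs k" for k n
  have disj: "\<not> inb k' n" if "as k - 2 \<le> n" "n \<le> bs k + 2" "k' \<noteq> k" for k k' n
  proof (cases "k' < k")
    case True
    then have "bs k' + 3 \<le> as k" by (rule sep)
    then show ?thesis using that unfolding inb_def by linarith
  next
    case False
    then have "k < k'" using that by simp
    then have "bs k + 3 \<le> as k'" by (rule sep)
    then show ?thesis using that unfolding inb_def by linarith
  qed
  have xs0: "xs k n = 0" if "\<not> inb k n" for k n using G(2)[of k] that unfolding inb_def by auto
  define Wf where "Wf S n = (\<Sum>k\<in>S \<inter> {..n}. xs k n)" for S :: "nat set" and n
  have Wval: "Wf S n = (if k \<in> S then xs k n else 0)" if "as k - 2 \<le> n" "n \<le> bs k + 2" for S k n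
  proof -
    have "Wf S n = (if k \<in> S \<inter> {..n} then xs k n else 0)"
      unfolding Wf_def by (rule sum_single) (use disj[OF that] xs0 in auto)
    moreover have "k > n \<Longrightarrow> xs k n = 0" using ask[of k] xs0[of k n] unfolding inb_def by simp
    ultimately show ?thesis by auto
  qed
  have Wzero: "Wf S n = 0" if "\<And>k. k \<in> S \<Longrightarrow> \<not> inb k n" for S n
    unfolding Wf_def by (rule sum.neutral) (use that xs0 in auto)
  have Aval: "Aop c (Wf S) n = (if k \<in> S then Aop c (xs k) n else 0)" if "as k - 1 \<le> n" "n \<le> bs k + 1" for S k n
  proof -
    have a1: "Wf S (n + 1) = (if k \<in> S then xs k (n + 1) else 0)" by (rule Wval) (use that in auto)
    have a2: "Wf S n = (if k \<in> S then xs k n else 0)" by (rule Wval) (use that in auto)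
    have a3: "n \<noteq> 0 \<Longrightarrow> Wf S (n - 1) = (if k \<in> S then xs k (n - 1) else 0)" by (rule Wval) (use that in auto)
    show ?thesis unfolding Aop_def using a1 a2 a3 by (cases "n = 0") auto
  qed
  have Azero: "Aop c (Wf S) n = 0" if "\<And>k. \<not> (as k - 1 \<le> n \<and> n \<le> bs k + 1)" for S n
  proof -
    have i1: "\<not> inb k (n + 1)" for k
    proof
      assume "inb k (n + 1)"
      then have "as k - 1 \<le> n \<and> n \<le> bs k + 1" unfolding inb_def by arith
      then show False using that by blast
    qed
    have i2: "\<not> inb k n" for k
    proof
      assume "inb k n"
      then have "as k - 1 \<le> n \<and> n \<le> bs k + 1" unfolding inb_def by arith
      then show False using that by blast
    qed
    have i3: "\<not> inb k (n - 1)" if "n \<noteq> 0" for k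
    proof
      assume "inb k (n - 1)"
      then have "as k - 1 \<le> n \<and> n \<le> bs k + 1" unfolding inb_def using \<open>n \<noteq> 0\<close> by arith
      then show False using \<open>\<And>k. \<not> (as k - 1 \<le> n \<and> n \<le> bs k + 1)\<close> by blast
    qed
    have "Wf S (n + 1) = 0" by (rule Wzero) (use i1 in auto)
    moreover have "Wf S n = 0" by (rule Wzero) (use i2 in auto)
    moreover have "n \<noteq> 0 \<Longrightarrow> Wf S (n - 1) = 0" by (rule Wzero) (use i3 in auto)
    ultimately show ?thesis unfolding Aop_def by auto
  qed
  have AWlp: "Aop c (Wf S) \<in> lp_space p" for S
  proof -
    have "szp p (Aop c (Wf S)) T \<le> 2" if T: "finite T" for T
    proof -
      define K where "K = Suc (Max (insert 0 T))"
      define E where "E k = {as k - 1..bs k + 1}" for k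
      have "szp p (Aop c (Wf S)) T \<le> szp p (Aop c (Wf S)) (\<Union>k<K. E k)"
      proof (rule szp_supp_le2[OF T])
        fix n assume n: "n \<in> T" "n \<notin> (\<Union>k<K. E k)"
        have "n < K" using n T unfolding K_def by (simp add: le_imp_less_Suc)
        have "\<not> (as k - 1 \<le> n \<and> n \<le> bs k + 1)" for k
        proof (cases "k < K")
          case True then show ?thesis using n unfolding E_def by auto
        next
          case False then show ?thesis using ask[of k] \<open>n < K\<close> by linarith
        qed
        then show "Aop c (Wf S) n = 0" by (rule Azero)
      qed (auto simp: E_def)
      also have "\<dots> \<le> (\<Sum>k<K. szp p (Aop c (Wf S)) (E k))" by (rule szp_UN) (simp add: E_def)
      also have "\<dots> \<le> (\<Sum>k<K. (1 / 2) ^ k)"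
      proof (rule sum_mono)
        fix k
        have "szp p (Aop c (Wf S)) (E k) = szp p (\<lambda>n. if k \<in> S then Aop c (xs k) n else 0) (E k)"
          by (rule szp_cong) (use Aval in \<open>auto simp: E_def\<close>)
        also have "\<dots> \<le> (1 / 2) ^ k"
        proof (cases "k \<in> S")
          case True then show ?thesis using G(4)[of k] unfolding E_def by simp
        next
          case False then show ?thesis using szp_zero[of "E k" "\<lambda>n. 0::complex" p] by simp
        qed
        finally show "szp p (Aop c (Wf S)) (E k) \<le> (1 / 2) ^ k" .
      qed
      also have "\<dots> \<le> 2" by (rule geom_half)
      finally show ?thesis .
    qed
    then show ?thesis using lp_iff[OF p] by blast
  qed
  have Wbig: "szp p (Wf S) {as k..bs k} = 2 ^ k" if "k \<in> S" for S k
  proof -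
    have "szp p (Wf S) {as k..bs k} = szp p (xs k) {as k..bs k}"
    proof (rule szp_cong)
      fix n assume "n \<in> {as k..bs k}"
      then have "as k - 2 \<le> n" "n \<le> bs k + 2" by auto
      then show "Wf S n = xs k n" using Wval[of k n S] that by simp
    qed
    then show ?thesis using G(3) by simp
  qed
  have Wnot: "Wf S \<notin> lp_space p" if S: "\<And>j. \<exists>k\<in>S. j \<le> k" for S
  proof
    assume "Wf S \<in> lp_space p"
    then obtain B where B: "\<And>T. finite T \<Longrightarrow> szp p (Wf S) T \<le> B" using lp_iff[OF p] by blast
    have "\<exists>j::nat. B < 2 ^ j" by (rule real_arch_pow) simp
    then obtain j :: nat where j: "B < 2 ^ j" by blast
    obtain k where k: "k \<in> S" "j \<le> k" using S by blast
    have jk: "(2::real) ^ j \<le> 2 ^ k" using k by (intro power_increasing) auto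
    have "szp p (Wf S) {as k..bs k} \<le> B" by (rule B) simp
    then show False using Wbig[OF k(1)] j jk by linarith
  qed
  define Ev :: "nat set" where "Ev = {k. even k}"
  define Od :: "nat set" where "Od = {k. odd k}"
  have EvS: "\<exists>k\<in>Ev. j \<le> k" for j unfolding Ev_def by (rule bexI[of _ "2 * j"]) auto
  have OdS: "\<exists>k\<in>Od. j \<le> k" for j unfolding Od_def by (rule bexI[of _ "2 * j + 1"]) auto
  have inj: "inj_on (Aop c) (lp_space p)" and surj: "Aop c ` lp_space p = lp_space p"
    using bij unfolding bij_betw_def by auto
  have uu_nlp: "uu c \<notin> lp_space p"
  proof
    assume u: "uu c \<in> lp_space p"
    have "Aop c (uu c) = Aop c (\<lambda>n. 0)" by (auto simp: uu_sol Aop_zero)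
    then have "uu c = (\<lambda>n. 0)" using inj u lp_zero[OF p] unfolding inj_on_def by blast
    then show False using uu0[of c] by (metis zero_neq_one)
  qed
  have step: "\<exists>t X. t \<noteq> 0 \<and> X \<in> lp_space p \<and> (\<forall>n. (\<forall>k\<in>S. \<not> inb k n) \<longrightarrow> uu c n = - X n / t)"
    if S: "\<And>j. \<exists>k\<in>S. j \<le> k" for S
  proof -
    obtain X where X: "X \<in> lp_space p" "Aop c X = Aop c (Wf S)"
      using AWlp[of S] surj by (metis imageE)
    define t where "t = Wf S 0 - X 0"
    have "Aop c (\<lambda>n. Wf S n - X n) n = 0" for n using X(2) by (simp add: Aop_diff)
    then have k: "(\<lambda>n. Wf S n - X n) = (\<lambda>n. t * uu c n)" using kernel unfolding t_def by metis
    have t0: "t \<noteq> 0"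
    proof
      assume "t = 0"
      have "Wf S n = X n" for n using fun_cong[OF k, of n] \<open>t = 0\<close> by simp
      then have "Wf S = X" by auto
      then show False using Wnot[OF S] X(1) by simp
    qed
    have "uu c n = - X n / t" if "\<forall>k\<in>S. \<not> inb k n" for n
    proof -
      have "Wf S n = 0" by (rule Wzero) (use that in auto)
      moreover have "Wf S n - X n = t * uu c n" using fun_cong[OF k, of n] by simp
      ultimately show ?thesis using t0 by (simp add: field_simps)
    qed
    then show ?thesis using t0 X(1) by blast
  qed
  obtain tE XE where tE: "tE \<noteq> 0" "XE \<in> lp_space p" "\<And>n. (\<forall>k\<in>Ev. \<not> inb k n) \<Longrightarrow> uu c n = - XE n / tE"
    using step[OF EvS] by blast
  obtain tO XO where tO: "tO \<noteq> 0" "XO \<in> lp_space p" "\<And>n. (\<forall>k\<in>Od. \<not> inb k n) \<Longrightarrow> uu c n = - XO n / tO"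
    using step[OF OdS] by blast
  obtain BE where BE: "\<And>T. finite T \<Longrightarrow> szp p XE T \<le> BE" using tE(2) lp_iff[OF p] by blast
  obtain BO where BO: "\<And>T. finite T \<Longrightarrow> szp p XO T \<le> BO" using tO(2) lp_iff[OF p] by blast
  have "szp p (uu c) T \<le> norm (1 / tE) powr dg p * BE + norm (1 / tO) powr dg p * BO" if T: "finite T" for T
  proof -
    define TE where "TE = {n \<in> T. \<forall>k\<in>Ev. \<not> inb k n}"
    define TO where "TO = {n \<in> T. \<forall>k\<in>Od. \<not> inb k n}"
    have cover: "T \<subseteq> TE \<union> TO"
    proof
      fix n assume n: "n \<in> T"
      show "n \<in> TE \<union> TO"
      proof (rule ccontr)
        assume "n \<notin> TE \<union> TO"
        then obtain k k' where kk: "k \<in> Ev" "inb k n" "k' \<in> Od" "inb k' n" using n unfolding TE_def TO_def by auto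
        then have "k \<noteq> k'" unfolding Ev_def Od_def by auto
        moreover have "as k - 2 \<le> n" "n \<le> bs k + 2" using kk(2) unfolding inb_def by auto
        ultimately show False using disj[of k n k'] kk(4) by blast
      qed
    qed
    have fin: "finite TE" "finite TO" using T unfolding TE_def TO_def by auto
    have "szp p (uu c) T \<le> szp p (uu c) (TE \<union> TO)" by (rule szp_mono_set[OF _ cover]) (use fin in auto)
    also have "\<dots> \<le> szp p (uu c) TE + szp p (uu c) TO" by (rule szp_union[OF fin])
    also have "szp p (uu c) TE = szp p (\<lambda>n. (- 1 / tE) * XE n) TE"
      by (rule szp_cong) (use tE(3) in \<open>auto simp: TE_def\<close>)
    also have "\<dots> = norm (1 / tE) powr dg p * szp p XE TE"
      using szp_scale[OF fin(1) p, of "- 1 / tE" XE] by (simp add: norm_divide)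
    also have "\<dots> \<le> norm (1 / tE) powr dg p * BE" by (rule mult_left_mono) (use BE fin in auto)
    also have "szp p (uu c) TO = szp p (\<lambda>n. (- 1 / tO) * XO n) TO"
      by (rule szp_cong) (use tO(3) in \<open>auto simp: TO_def\<close>)
    also have "\<dots> = norm (1 / tO) powr dg p * szp p XO TO"
      using szp_scale[OF fin(2) p, of "- 1 / tO" XO] by (simp add: norm_divide)
    also have "\<dots> \<le> norm (1 / tO) powr dg p * BO" by (rule mult_left_mono) (use BO fin in auto)
    finally show ?thesis by simp
  qed
  then have "uu c \<in> lp_space p" using lp_iff[OF p] by blast
  then show False using uu_nlp by simp
qed

lemma frac_mult_pos:
  assumes "\<alpha> \<notin> \<rat>" "1 \<le> j"
  shows "0 < frac (real j * \<alpha>)"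
proof -
  have "frac (real j * \<alpha>) \<noteq> 0"
  proof
    assume "frac (real j * \<alpha>) = 0"
    then have "real j * \<alpha> \<in> \<int>" by simp
    then obtain z where z: "real j * \<alpha> = of_int z" by (auto elim: Ints_cases)
    then have "\<alpha> = of_int z / real j" using assms(2) by (simp add: field_simps)
    then have "\<alpha> \<in> \<rat>" by simp
    then show False using assms(1) by simp
  qed
  then show ?thesis using frac_ge_0[of "real j * \<alpha>"] by linarith
qed

lemma sturm_rec:
  assumes \<alpha>: "0 \<le> \<alpha>" "\<alpha> \<le> 1" "\<alpha> \<notin> \<rat>"
  shows "\<exists>m::int. R \<le> m \<and> (\<forall>n\<in>{a..b}. sturm_pot \<alpha> \<theta> (n + m) = sturm_pot \<alpha> \<theta> n)"
proof (cases "a \<le> b")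
  case False then show ?thesis by (intro exI[of _ R]) auto
next
  case True
  define t where "t n = frac (of_int n * \<alpha> + \<theta>)" for n :: int
  define g where "g n = (if t n < 1 - \<alpha> then 1 - \<alpha> - t n else 1 - t n)" for n
  have gpos: "0 < g n" for n unfolding g_def using frac_lt_1[of "of_int n * \<alpha> + \<theta>"] unfolding t_def by auto
  define \<delta> where "\<delta> = Min (g ` {a..b})"
  have \<delta>pos: "0 < \<delta>" unfolding \<delta>_def using True gpos by (subst Min_gr_iff) auto
  have \<delta>le: "\<delta> \<le> g n" if "n \<in> {a..b}" for n unfolding \<delta>_def using that by (intro Min_le) auto
  define R' where "R' = nat R"
  define \<mu> where "\<mu> = Min (insert 1 ((\<lambda>j. frac (real j * \<alpha>)) ` {1..R'}))"
  have \<mu>pos: "0 < \<mu>" unfolding \<mu>_def using frac_mult_pos[OF \<alpha>(3)] by (subst Min_gr_iff) auto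
  have \<mu>le: "\<mu> \<le> frac (real j * \<alpha>)" if "j \<in> {1..R'}" for j unfolding \<mu>_def using that by (intro Min_le) auto
  have \<mu>1: "\<mu> \<le> 1" unfolding \<mu>_def by (intro Min_le) auto
  define \<eta> where "\<eta> = min \<delta> \<mu>"
  have \<eta>pos: "0 < \<eta>" unfolding \<eta>_def using \<delta>pos \<mu>pos by simp
  have h1: "0 \<le> \<eta> / 2" "\<eta> / 2 \<le> 1" "\<eta> / 2 > 0" using \<eta>pos \<mu>1 unfolding \<eta>_def by auto
  obtain k where k: "k > 0" "\<bar>frac (real k * \<alpha>) - \<eta> / 2\<bar> < \<eta> / 2"
    using Kronecker_approx_1_explicit[OF \<alpha>(3) h1] by blast
  define s where "s = frac (real k * \<alpha>)"
  have s0: "0 < s" unfolding s_def by (rule frac_mult_pos[OF \<alpha>(3)]) (use k(1) in simp)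
  have "\<bar>s - \<eta> / 2\<bar> < \<eta> / 2" using k(2) unfolding s_def .
  then have "s - \<eta> / 2 < \<eta> / 2" by (simp only: abs_less_iff)
  then have "s < \<eta>" by linarith
  note s = s0 this
  have kR: "R \<le> int k"
  proof (rule ccontr)
    assume "\<not> R \<le> int k"
    then have "k \<in> {1..R'}" using k(1) unfolding R'_def by auto
    then have "\<mu> \<le> s" using \<mu>le unfolding s_def by simp
    then show False using s unfolding \<eta>_def by linarith
  qed
  have "sturm_pot \<alpha> \<theta> (n + int k) = sturm_pot \<alpha> \<theta> n" if n: "n \<in> {a..b}" for n
  proof -
    have sg: "s < g n" using s \<delta>le[OF n] unfolding \<eta>_def by linarith
    have tl: "0 \<le> t n" "t n < 1" unfolding t_def by (simp_all add: frac_lt_1)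
    have "of_int (n + int k) * \<alpha> + \<theta> = (of_int n * \<alpha> + \<theta>) + real k * \<alpha>" by (simp add: algebra_simps)
    then have "frac (of_int (n + int k) * \<alpha> + \<theta>) = frac ((of_int n * \<alpha> + \<theta>) + real k * \<alpha>)"
      by (rule arg_cong)
    also have "\<dots> = t n + s"
    proof -
      have "t n + s < 1" using sg \<alpha>(1) unfolding g_def by (auto split: if_splits)
      then show ?thesis unfolding t_def s_def by (simp add: frac_add)
    qed
    finally have fe: "frac (of_int (n + int k) * \<alpha> + \<theta>) = t n + s" .
    have "(t n + s \<in> {1 - \<alpha>..<1}) = (t n \<in> {1 - \<alpha>..<1})"
    proof (cases "t n < 1 - \<alpha>")
      case True
      then have "t n + s < 1 - \<alpha>" using sg unfolding g_def by simp
      then show ?thesis using True by auto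
    next
      case False
      then have "t n + s < 1" using sg unfolding g_def by simp
      then show ?thesis using False s tl by auto
    qed
    then show ?thesis unfolding sturm_pot_def fe using t_def by simp
  qed
  then show ?thesis using kR by blast
qed

definition ccoef :: "real \<Rightarrow> real \<Rightarrow> real \<Rightarrow> complex \<Rightarrow> int \<Rightarrow> complex" where
  "ccoef lam \<alpha> \<theta> z n = complex_of_real (lam * sturm_pot \<alpha> \<theta> n) - z"

lemma LB_from_A:
  assumes p: "1 \<le> p" and \<alpha>: "0 \<le> \<alpha>" "\<alpha> \<le> 1" "\<alpha> \<notin> \<rat>"
    and bij: "bij_betw (Aop (ccoef lam \<alpha> \<theta> z)) (lp_space p) (lp_space p)"
  shows "\<exists>C. 0 \<le> C \<and> LB p (ccoef lam \<alpha> \<theta> z) C"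
proof -
  let ?c = "ccoef lam \<alpha> \<theta> z"
  obtain R C where R: "1 \<le> R" and C: "0 \<le> C"
    and lbA: "\<And>x a b. R \<le> a \<Longrightarrow> (\<forall>n. n < a \<or> b < n \<longrightarrow> x n = 0) \<Longrightarrow>
           szp p x {a..b} \<le> C * szp p (Aop ?c x) {a - 1..b + 1}"
    using gliding[OF p bij] by blast
  have "LB p ?c C"
    unfolding LB_def
  proof (intro allI impI)
    fix x :: "int \<Rightarrow> complex" and a b
    assume supp: "\<forall>n. n < a \<or> b < n \<longrightarrow> x n = 0"
    show "szp p x {a..b} \<le> C * szp p (Bop ?c x) {a - 1..b + 1}"
    proof (cases "a \<le> b")
      case False
      then have "szp p x {a..b} = 0" by simp
      moreover have "0 \<le> C * szp p (Bop ?c x) {a - 1..b + 1}" using C by (simp add: szp_nonneg)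
      ultimately show ?thesis by simp
    next
      case True
      obtain m where m: "int R + 1 - a \<le> m" and mv: "\<And>n. n \<in> {a..b} \<Longrightarrow> sturm_pot \<alpha> \<theta> (n + m) = sturm_pot \<alpha> \<theta> n"
        using sturm_rec[OF \<alpha>, of "int R + 1 - a" a b \<theta>] by blast
      define a' where "a' = nat (a + m)"
      define b' where "b' = nat (b + m)"
      define f where "f k = int k - m" for k :: nat
      define x' where "x' k = x (f k)" for k
      have am: "int R + 1 \<le> a + m" using m by simp
      have a'R: "R \<le> a'" unfolding a'_def using am by simp
      have inj: "inj_on f S" for S unfolding f_def by (auto simp: inj_on_def)
      have supp': "\<forall>n. n < a' \<or> b' < n \<longrightarrow> x' n = 0"
        unfolding x'_def f_def a'_def b'_def using supp am True by auto
      have im1: "f ` {a'..b'} = {a..b}"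
      proof
        show "f ` {a'..b'} \<subseteq> {a..b}" unfolding f_def a'_def b'_def using am True by auto
        show "{a..b} \<subseteq> f ` {a'..b'}"
        proof
          fix n assume n: "n \<in> {a..b}"
          then have "nat (n + m) \<in> {a'..b'}" "f (nat (n + m)) = n" unfolding a'_def b'_def f_def using am by auto
          then show "n \<in> f ` {a'..b'}" by (metis imageI)
        qed
      qed
      have im2: "f ` {a' - 1..b' + 1} = {a - 1..b + 1}"
      proof
        show "f ` {a' - 1..b' + 1} \<subseteq> {a - 1..b + 1}" unfolding f_def a'_def b'_def using am True by auto
        show "{a - 1..b + 1} \<subseteq> f ` {a' - 1..b' + 1}"
        proof
          fix n assume n: "n \<in> {a - 1..b + 1}"
          then have "nat (n + m) \<in> {a' - 1..b' + 1}" "f (nat (n + m)) = n" unfolding a'_def b'_def f_def using am by auto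
          then show "n \<in> f ` {a' - 1..b' + 1}" by (metis imageI)
        qed
      qed
      have e1: "szp p x' {a'..b'} = szp p x {a..b}"
        unfolding x'_def using szp_reindex[OF inj, of p x "{a'..b'}"] im1 by simp
      have e2: "szp p (Aop ?c x') {a' - 1..b' + 1} = szp p (Bop ?c x) {a - 1..b + 1}"
      proof -
        have "szp p (Aop ?c x') {a' - 1..b' + 1} = szp p (\<lambda>k. Bop ?c x (f k)) {a' - 1..b' + 1}"
        proof (rule szp_cong)
          fix k assume k: "k \<in> {a' - 1..b' + 1}"
          then have k1: "k \<noteq> 0" unfolding a'_def using am R by auto
          have cv: "?c (int k) * x (f k) = ?c (f k) * x (f k)"
          proof (cases "x (f k) = 0")
            case False
            then have "\<not> (f k < a \<or> b < f k)" using supp by blast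
            then have "f k \<in> {a..b}" by auto
            then have "sturm_pot \<alpha> \<theta> (f k + m) = sturm_pot \<alpha> \<theta> (f k)" by (rule mv)
            then show ?thesis unfolding f_def ccoef_def by simp
          qed simp
          have "f (k + 1) = f k + 1" "f (k - 1) = f k - 1" unfolding f_def using k1 by auto
          then show "Aop ?c x' k = Bop ?c x (f k)" unfolding Aop_def Bop_def x'_def using k1 cv by simp
        qed
        also have "\<dots> = szp p (Bop ?c x) {a - 1..b + 1}" using szp_reindex[OF inj, of p "Bop ?c x"] im2 by simp
        finally show ?thesis .
      qed
      show ?thesis using lbA[OF a'R supp'] e1 e2 by simp
    qed
  qed
  then show ?thesis using C by blast
qed

theorem proposition5p19:
  fixes p :: ereal and \<alpha> \<theta> lam :: real
  assumes "1 \<le> p"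
    and "0 \<le> \<alpha>" and "\<alpha> \<le> 1" and "\<alpha> \<notin> \<rat>"
    and "0 \<le> \<theta>" and "\<theta> < 1"
  shows "op_spectrum (lp_space p) (H_op lam \<alpha> \<theta>)
         \<subseteq> op_spectrum (lp_space p) (H_plus lam \<alpha> \<theta>)"
proof
  fix z assume z: "z \<in> op_spectrum (lp_space p) (H_op lam \<alpha> \<theta>)"
  show "z \<in> op_spectrum (lp_space p) (H_plus lam \<alpha> \<theta>)"
  proof (rule ccontr)
    assume "z \<notin> op_spectrum (lp_space p) (H_plus lam \<alpha> \<theta>)"
    then have bA0: "bij_betw (\<lambda>x n. H_plus lam \<alpha> \<theta> x n - z * x n) (lp_space p) (lp_space p)"
      unfolding op_spectrum_def by simp
    let ?c = "ccoef lam \<alpha> \<theta> z"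
    have eA: "(\<lambda>x n. H_plus lam \<alpha> \<theta> x n - z * x n) = Aop ?c"
      unfolding H_plus_def Aop_def ccoef_def by (auto simp: algebra_simps fun_eq_iff)
    have eB: "(\<lambda>x n. H_op lam \<alpha> \<theta> x n - z * x n) = Bop ?c"
      unfolding H_op_def Bop_def ccoef_def by (auto simp: algebra_simps fun_eq_iff)
    have bA: "bij_betw (Aop ?c) (lp_space p) (lp_space p)" using bA0 eA by simp
    obtain C where C: "0 \<le> C" "LB p ?c C"
      using LB_from_A[OF assms(1-4) bA] by blast
    define M where "M = \<bar>lam\<bar> + norm z"
    have M: "norm (?c n) \<le> M" for n
    proof -
      have "norm (?c n) \<le> norm (complex_of_real (lam * sturm_pot \<alpha> \<theta> n)) + norm z"
        unfolding ccoef_def by (rule norm_triangle_ineq4)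
      also have "norm (complex_of_real (lam * sturm_pot \<alpha> \<theta> n)) \<le> \<bar>lam\<bar>"
        unfolding sturm_pot_def by (auto simp: abs_mult)
      finally show ?thesis unfolding M_def by simp
    qed
    define L where "L = max 2 \<lceil>24 * C\<rceil>"
    have L: "2 \<le> L" "24 * C \<le> real_of_int L"
      unfolding L_def using le_of_int_ceiling[of "24 * C"] by (auto simp: max_def)
    interpret S: setting p ?c C M L
      by unfold_locales (use assms(1) C M L in auto)
    have "bij_betw (Bop ?c) (lp_space p) (lp_space p)" by (rule S.bij_lp)
    then have "bij_betw (\<lambda>x n. H_op lam \<alpha> \<theta> x n - z * x n) (lp_space p) (lp_space p)"
      using eB by simp
    then show False using z unfolding op_spectrum_def by simp
  qed
qed

end
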